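(* For every $T\in L(W,V)$ with $\mathcal{I}_T=(p_1,\ldots,p_k)$, we have $\dim \mathfrak{I}(T)=\deg \prod_{i=1}^{k}p_i$.
   Context: Let $\mathbb{F}_q$ be the finite field with $q$ elements and let $n\ge k$ be positive integers. Let $V$ be an $n$-dimensional $\mathbb{F}_q$-vector space and $W\subseteq V$ a $k$-dimensional subspace. Fix an ordered basis $\mathcal{B}_1=(v_1,\ldots,v_k)$ of $W$ and extend it to an ordered basis $\mathcal{B}_2=(v_1,\ldots,v_n)$ of $V$. $L(W,V)$ denotes the space of $\mathbb{F}_q$-linear maps $W\to V$. $I_{n,k}\in M_{n,k}(\mathbb{F}_q)$ is the matrix whose $(i,j)$ entry is $1$ if $i=j$ and $0$ otherwise. For a nonzero polynomial matrix $A\in M_{n,k}(\mathbb{F}_q[x])$, its $i$-th determinantal divisor $\delta_i(A)$ is the monic gcd of all $i\times i$ minors of $A$ (with $\delta_0=1$), and its invariant factors are the monic polynomials $p_i=\delta_i(A)/\delta_{i-1}(A)$ (for those $i$ with $\delta_i(A)\neq 0$); they satisfy $p_i\mid p_{i+1}$ and are the diagonal entries of the Smith normal form of $A$. For $T\in L(W,V)$ with matrix $B\in M_{n,k}(\mathbb{F}_q)$ with respect to $\mathcal{B}_1,\mathcal{B}_2$, the matrix $xI_{n,k}-B$ always has $\delta_k\neq 0$, hence exactly $k$ invariant factors $p_1\mid p_2\mid\cdots\mid p_k$; these are called the invariant factors of $T$, and we write $\mathcal{I}_T=(p_1,\ldots,p_k)$. $\mathfrak{I}(T)$ denotes the maximal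 $T$-invariant subspace contained in $W$, i.e. the largest subspace $U\subseteq W$ with $T(U)\subseteq U$. *)

theory Defs
  imports "Jordan_Normal_Form.Determinant" "Jordan_Normal_Form.DL_Submatrix"
    "HOL-Computational_Algebra.Polynomial_Factorial"
begin

definition charmat :: "'a::field mat \<Rightarrow> 'a poly mat" where
  "charmat B = mat (dim_row B) (dim_col B)
     (\<lambda>(i,j). (if i = j then [:0, 1:] else 0) - [: B $$ (i,j) :])"

definition det_divisor :: "'a::field_gcd poly mat \<Rightarrow> nat \<Rightarrow> 'a poly" where
  "det_divisor A i = (if i = 0 then 1 else
     Gcd {det (submatrix A I J) | I J. I \<subseteq> {..<dim_row A} \<and> J \<subseteq> {..<dim_col A}
                                     \<and> card I = i \<and> card J = i})"

definition inv_factor :: "'a::field_gcd poly mat \<Rightarrow> nat \<Rightarrow> 'a poly" where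
  "inv_factor A i = det_divisor A i div det_divisor A (i - 1)"

text \<open>Matrix of T : W \<rightarrow> V w.r.t. the bases take k bs of W and bs of V.\<close>
definition matrix_of_map ::
  "('a::field \<Rightarrow> 'v::ab_group_add \<Rightarrow> 'v) \<Rightarrow> 'v list \<Rightarrow> nat \<Rightarrow> ('v \<Rightarrow> 'v) \<Rightarrow> 'a mat" where
  "matrix_of_map scale bs k T =
     mat (length bs) k (\<lambda>(i,j). module.representation scale (set bs) (T (bs ! j)) (bs ! i))"

definition max_inv_subspace ::
  "('a::field \<Rightarrow> 'v::ab_group_add \<Rightarrow> 'v) \<Rightarrow> 'v set \<Rightarrow> ('v \<Rightarrow> 'v) \<Rightarrow> 'v set" where
  "max_inv_subspace scale W T =
     (GREATEST U. module.subspace scale U \<and> U \<subseteq> W \<and> T ` U \<subseteq> U)"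

end

theory Submission
  imports Defs "Jordan_Normal_Form.Char_Poly"
begin

lemma rank_perm:
  assumes inj: "inj_on f {0..<t}" and I: "I = f ` {0..<t}"
  defines "\<sigma> \<equiv> \<lambda>r. if r < t then card {a\<in>I. a < f r} else r"
  shows "\<sigma> permutes {0..<t}" "\<And>r. r < t \<Longrightarrow> pick I (\<sigma> r) = f r"
proof -
  have cI: "card I = t" using I inj by (simp add: card_image)
  have fin: "finite I" using I by simp
  show pk: "\<And>r. r < t \<Longrightarrow> pick I (\<sigma> r) = f r"
  proof -
    fix r assume "r < t"
    then have "f r \<in> I" using I by auto
    then show "pick I (\<sigma> r) = f r" unfolding \<sigma>_def using \<open>r < t\<close> by (simp add: pick_card_in_set)
  qed
  show "\<sigma> permutes {0..<t}"
  proof (rule inj_on_nat_permutes)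
    show "inj_on \<sigma> {0..<t}"
    proof (rule inj_onI)
      fix x y assume xy: "x \<in> {0..<t}" "y \<in> {0..<t}" "\<sigma> x = \<sigma> y"
      then have "f x = f y" using pk[of x] pk[of y] by simp
      then show "x = y" using inj xy by (meson inj_onD)
    qed
    show "\<sigma> \<in> {0..<t} \<rightarrow> {0..<t}"
    proof
      fix r assume r: "r \<in> {0..<t}"
      have "{a\<in>I. a < f r} \<subset> I" using r I by auto
      then have "card {a\<in>I. a < f r} < card I" by (rule psubset_card_mono[OF fin])
      then show "\<sigma> r \<in> {0..<t}" using r cI unfolding \<sigma>_def by auto
    qed
    show "finite {0..<t}" by simp
    show "\<And>i. i \<notin> {0..<t} \<Longrightarrow> \<sigma> i = i" unfolding \<sigma>_def by simp
  qed
qed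

definition sel :: "nat \<Rightarrow> 'a mat \<Rightarrow> (nat \<Rightarrow> nat) \<Rightarrow> (nat \<Rightarrow> nat) \<Rightarrow> 'a mat" where
  "sel t A f h = mat t t (\<lambda>(r,c). A $$ (f r, h c))"

lemma sel_carrier[simp]: "sel t A f h \<in> carrier_mat t t"
  unfolding sel_def by simp

lemma sel_dim[simp]: "dim_row (sel t A f h) = t" "dim_col (sel t A f h) = t"
  unfolding sel_def by simp_all

lemma sel_index[simp]: "r < t \<Longrightarrow> c < t \<Longrightarrow> sel t A f h $$ (r,c) = A $$ (f r, h c)"
  unfolding sel_def by simp

lemma det_sel_perm:
  assumes S: "S \<in> carrier_mat t t" and p: "p permutes {0..<t}" and q: "q permutes {0..<t}"
  shows "det (mat t t (\<lambda>(r,c). S $$ (p r, q c))) = signof p * signof q * det S"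
proof -
  let ?X = "mat t t (\<lambda>(r,c). S $$ (r, q c))"
  have X: "?X \<in> carrier_mat t t" by simp
  have XT: "?X\<^sup>T = mat t t (\<lambda>(i,j). S\<^sup>T $$ (q i, j))"
  proof (rule eq_matI)
    fix i j assume "i < dim_row (mat t t (\<lambda>(i,j). S\<^sup>T $$ (q i, j)))" "j < dim_col (mat t t (\<lambda>(i,j). S\<^sup>T $$ (q i, j)))"
    then have ij: "i < t" "j < t" by auto
    then have "q i < t" using permutes_in_image[OF q, of i] by simp
    then show "?X\<^sup>T $$ (i, j) = mat t t (\<lambda>(i,j). S\<^sup>T $$ (q i, j)) $$ (i, j)"
      using ij S by simp
  qed simp_all
  have ST: "S\<^sup>T \<in> carrier_mat t t" using S by simp
  have "det ?X = det (?X\<^sup>T)" using det_transpose[OF X] by simp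
  also have "\<dots> = signof q * det (S\<^sup>T)" unfolding XT by (rule det_permute_rows[OF ST q])
  also have "\<dots> = signof q * det S" using det_transpose[OF S] by simp
  finally have dX: "det ?X = signof q * det S" .
  have "mat t t (\<lambda>(r,c). S $$ (p r, q c)) = mat t t (\<lambda>(i,j). ?X $$ (p i, j))"
  proof (rule eq_matI)
    fix i j assume "i < dim_row (mat t t (\<lambda>(i,j). ?X $$ (p i, j)))" "j < dim_col (mat t t (\<lambda>(i,j). ?X $$ (p i, j)))"
    then have ij: "i < t" "j < t" by auto
    then have "p i < t" using permutes_in_image[OF p, of i] by simp
    then show "mat t t (\<lambda>(r,c). S $$ (p r, q c)) $$ (i, j) = mat t t (\<lambda>(i,j). ?X $$ (p i, j)) $$ (i, j)"
      using ij by simp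
  qed simp_all
  then show ?thesis using det_permute_rows[OF X p] dX by simp
qed

lemma sel_dvd:
  assumes A: "A \<in> carrier_mat nr nc"
    and mins: "\<And>I J. I \<subseteq> {..<nr} \<Longrightarrow> J \<subseteq> {..<nc} \<Longrightarrow> card I = t \<Longrightarrow> card J = t
                 \<Longrightarrow> g dvd det (submatrix A I J)"
    and f: "\<And>r. r < t \<Longrightarrow> f r < nr" and h: "\<And>c. c < t \<Longrightarrow> h c < nc"
  shows "g dvd det (sel t A f h)"
proof (cases "inj_on f {0..<t} \<and> inj_on h {0..<t}")
  case False
  then consider (a) "\<not> inj_on f {0..<t}" | (b) "\<not> inj_on h {0..<t}" by blast
  then show ?thesis
  proof cases
    case a
    then obtain i j where ij: "i \<noteq> j" "i < t" "j < t" "f i = f j" unfolding inj_on_def by auto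
    have "row (sel t A f h) i = row (sel t A f h) j"
      using ij by (auto intro!: eq_vecI)
    then have "det (sel t A f h) = 0" using det_identical_rows[OF sel_carrier[of t A f h] ij(1-3)] by simp
    then show ?thesis by simp
  next
    case b
    then obtain i j where ij: "i \<noteq> j" "i < t" "j < t" "h i = h j" unfolding inj_on_def by auto
    have "col (sel t A f h) i = col (sel t A f h) j"
      using ij by (auto intro!: eq_vecI)
    then have "det (sel t A f h) = 0" using det_identical_columns[OF sel_carrier[of t A f h] ij(1-3)] by simp
    then show ?thesis by simp
  qed
next
  case True
  define I where "I = f ` {0..<t}"
  define J where "J = h ` {0..<t}"
  define p where "p = (\<lambda>r. if r < t then card {a\<in>I. a < f r} else r)"
  define q where "q = (\<lambda>r. if r < t then card {a\<in>J. a < h r} else r)"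
  note P = rank_perm[OF conjunct1[OF True] I_def, folded p_def]
  note Q = rank_perm[OF conjunct2[OF True] J_def, folded q_def]
  have cI: "card I = t" using True I_def by (simp add: card_image)
  have cJ: "card J = t" using True J_def by (simp add: card_image)
  have IS: "I \<subseteq> {..<nr}" using f I_def by auto
  have JS: "J \<subseteq> {..<nc}" using h J_def by auto
  have e1: "{i. i < dim_row A \<and> i \<in> I} = I" using IS A by auto
  have e2: "{i. i < dim_col A \<and> i \<in> J} = J" using JS A by auto
  let ?S = "submatrix A I J"
  have "dim_row ?S = t" using dim_submatrix(1)[of A I J] e1 cI by simp
  moreover have "dim_col ?S = t" using dim_submatrix(2)[of A I J] e2 cJ by simp
  ultimately have S: "?S \<in> carrier_mat t t" by auto
  have "sel t A f h = mat t t (\<lambda>(r,c). ?S $$ (p r, q c))"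
  proof (rule eq_matI)
    fix i j assume ij: "i < dim_row (mat t t (\<lambda>(r,c). ?S $$ (p r, q c)))"
        "j < dim_col (mat t t (\<lambda>(r,c). ?S $$ (p r, q c)))"
    then have "i < t" "j < t" by auto
    then have "p i < t" "q j < t" using permutes_in_image[OF P(1)] permutes_in_image[OF Q(1)] by auto
    then have "?S $$ (p i, q j) = A $$ (pick I (p i), pick J (q j))"
      by (intro submatrix_index) (auto simp: e1 e2 cI cJ)
    moreover have "pick I (p i) = f i" using P(2)[of i] \<open>i < t\<close> by (simp add: p_def)
    moreover have "pick J (q j) = h j" using Q(2)[of j] \<open>j < t\<close> by (simp add: q_def)
    ultimately show "sel t A f h $$ (i, j) = mat t t (\<lambda>(r,c). ?S $$ (p r, q c)) $$ (i, j)"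
      using \<open>i < t\<close> \<open>j < t\<close> by simp
  qed auto
  then have "det (sel t A f h) = signof p * signof q * det ?S"
    using det_sel_perm[OF S P(1) Q(1)] by simp
  moreover have "g dvd det ?S" using mins[OF IS JS cI cJ] .
  ultimately show ?thesis by simp
qed

definition minors_dvd :: "'a::comm_ring_1 \<Rightarrow> 'a mat \<Rightarrow> nat \<Rightarrow> bool" where
  "minors_dvd g A t = (\<forall>I J. I \<subseteq> {..<dim_row A} \<longrightarrow> J \<subseteq> {..<dim_col A} \<longrightarrow> card I = t \<longrightarrow> card J = t
       \<longrightarrow> g dvd det (submatrix A I J))"

lemma sel_dvd':
  assumes "minors_dvd g A t" "\<And>r. r < t \<Longrightarrow> f r < dim_row A" "\<And>c. c < t \<Longrightarrow> h c < dim_col A"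
  shows "g dvd det (sel t A f h)"
  using sel_dvd[of A "dim_row A" "dim_col A" t g f h] assms unfolding minors_dvd_def by auto

lemma det_mult_dvd:
  assumes N: "N \<in> carrier_mat n k" and L: "L \<in> carrier_mat k n"
    and mins: "minors_dvd g N k"
  shows "g dvd det (L * N)"
proof -
  let ?F = "{f. (\<forall>i\<in>{0..<k}. f i \<in> {0..<n}) \<and> (\<forall>i. i \<notin> {0..<k} \<longrightarrow> f i = i)}"
  have "det (L * N) = (\<Sum>f\<in>?F. det (mat\<^sub>r k k (\<lambda>i. L $$ (i, f i) \<cdot>\<^sub>v row N (f i))))"
    unfolding mat_mul_finsum_alt[OF L N]
    by (rule det_linear_rows_sum) (use N in auto)
  also have "\<dots> = (\<Sum>f\<in>?F. prod (\<lambda>i. L$$(i,f i)) {0..<k} * det (sel k N f id))"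
  proof (rule sum.cong[OF refl])
    fix f assume f: "f \<in> ?F"
    have "det (mat\<^sub>r k k (\<lambda>i. L $$ (i, f i) \<cdot>\<^sub>v row N (f i))) =
          prod (\<lambda>i. L$$(i,f i)) {0..<k} * det (mat\<^sub>r k k (\<lambda>i. row N (f i)))"
      by (rule det_rows_mul) (use N in auto)
    moreover have "mat\<^sub>r k k (\<lambda>i. row N (f i)) = sel k N f id"
    proof (rule eq_matI)
      fix i j assume "i < dim_row (sel k N f id)" "j < dim_col (sel k N f id)"
      then have ij: "i < k" "j < k" by auto
      then have "f i < n" using f by auto
      then show "mat\<^sub>r k k (\<lambda>i. row N (f i)) $$ (i, j) = sel k N f id $$ (i, j)"
        using ij N by simp
    qed auto
    ultimately show "det (mat\<^sub>r k k (\<lambda>i. L $$ (i, f i) \<cdot>\<^sub>v row N (f i))) =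
          prod (\<lambda>i. L$$(i,f i)) {0..<k} * det (sel k N f id)" by simp
  qed
  also have "g dvd \<dots>"
  proof (rule dvd_sum)
    fix f assume f: "f \<in> ?F"
    have "g dvd det (sel k N f id)"
      by (rule sel_dvd'[OF mins]) (use f N in auto)
    then show "g dvd prod (\<lambda>i. L$$(i,f i)) {0..<k} * det (sel k N f id)" by simp
  qed
  finally show ?thesis .
qed

definition rowsel :: "nat \<Rightarrow> 'a mat \<Rightarrow> (nat \<Rightarrow> nat) \<Rightarrow> 'a mat" where
  "rowsel t A f = mat t (dim_col A) (\<lambda>(r,l). A $$ (f r, l))"

lemma rowsel_carrier: "rowsel t A f \<in> carrier_mat t (dim_col A)"
  unfolding rowsel_def by simp

lemma sel_mult_left:
  assumes Q: "Q \<in> carrier_mat m n" and N: "N \<in> carrier_mat n k" and f: "\<And>r. r < k \<Longrightarrow> f r < m"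
  shows "sel k (Q * N) f id = rowsel k Q f * N"
proof (rule eq_matI)
  fix i j assume "i < dim_row (rowsel k Q f * N)" "j < dim_col (rowsel k Q f * N)"
  then have ij: "i < k" "j < k" using N by (auto simp: rowsel_def)
  have "row (rowsel k Q f) i = row Q (f i)"
    using ij Q f[OF ij(1)] by (auto simp: rowsel_def intro!: eq_vecI)
  then show "sel k (Q * N) f id $$ (i, j) = (rowsel k Q f * N) $$ (i, j)"
    using ij f[OF ij(1)] Q N by (simp add: rowsel_def)
qed (use N in \<open>auto simp: rowsel_def\<close>)

lemma sel_mult_right:
  assumes A: "A \<in> carrier_mat m k" and P: "P \<in> carrier_mat k k" and f: "\<And>r. r < k \<Longrightarrow> f r < m"
  shows "sel k (A * P) f id = sel k A f id * P"
proof (rule eq_matI)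
  fix i j assume "i < dim_row (sel k A f id * P)" "j < dim_col (sel k A f id * P)"
  then have ij: "i < k" "j < k" using P by auto
  have "row (sel k A f id) i = row A (f i)"
    using ij A f[OF ij(1)] by (auto intro!: eq_vecI)
  then show "sel k (A * P) f id $$ (i, j) = (sel k A f id * P) $$ (i, j)"
    using ij f[OF ij(1)] A P by simp
qed (use P in auto)

lemma pick_lessThan: "c < k \<Longrightarrow> pick {..<k} c = c"
proof -
  assume c: "c < k"
  have "{a \<in> {..<k}. a < c} = {..<c}" using c by auto
  then have "pick {..<k} (card {a \<in> {..<k}. a < c}) = c" using pick_card_in_set[of c "{..<k}"] c by simp
  then show ?thesis using \<open>{a \<in> {..<k}. a < c} = {..<c}\<close> by simp
qed

lemma submatrix_sel:
  assumes N: "N \<in> carrier_mat n k" and I: "I \<subseteq> {..<n}" "card I = k" and J: "J \<subseteq> {..<k}" "card J = k"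
  shows "submatrix N I J = sel k N (pick I) id"
proof -
  have Jk: "J = {..<k}" using J by (simp add: card_subset_eq)
  have e1: "{i. i < dim_row N \<and> i \<in> I} = I" using I N by auto
  have e2: "{i. i < dim_col N \<and> i \<in> J} = J" using J N by auto
  show ?thesis
  proof (rule eq_matI)
    fix i j assume "i < dim_row (sel k N (pick I) id)" "j < dim_col (sel k N (pick I) id)"
    then have ij: "i < k" "j < k" by auto
    have "submatrix N I J $$ (i,j) = N $$ (pick I i, pick J j)"
      by (rule submatrix_index) (use ij e1 e2 I J in simp_all)
    then show "submatrix N I J $$ (i,j) = sel k N (pick I) id $$ (i,j)"
      using ij Jk pick_lessThan[OF ij(2)] by simp
  qed (use e1 e2 I J in \<open>simp_all add: dim_submatrix\<close>)
qed

lemma pick_lt: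
  assumes "I \<subseteq> {..<n}" "card I = k" "r < k"
  shows "pick I r < n"
proof -
  have "pick I r \<in> I" by (rule pick_in_set) (use assms in simp)
  then show ?thesis using assms by auto
qed

lemma minors_dvd_transfer:
  assumes N: "N \<in> carrier_mat n k" and Q: "Q \<in> carrier_mat m n" and P: "P \<in> carrier_mat k k"
    and mins: "minors_dvd g N k"
  shows "minors_dvd g (Q * N * P) k"
  unfolding minors_dvd_def
proof (intro allI impI)
  fix I J assume I: "I \<subseteq> {..<dim_row (Q * N * P)}" and J: "J \<subseteq> {..<dim_col (Q * N * P)}"
    and cI: "card I = k" and cJ: "card J = k"
  have QN: "Q * N \<in> carrier_mat m k" using Q N by simp
  have I': "I \<subseteq> {..<m}" using I Q by simp
  have J': "J \<subseteq> {..<k}" using J P by simp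
  have pk: "\<And>r. r < k \<Longrightarrow> pick I r < m" using pick_lt[OF I' cI] .
  have "submatrix (Q * N * P) I J = sel k (Q * N * P) (pick I) id"
    by (rule submatrix_sel[OF _ I' cI J' cJ]) (use QN P in simp)
  also have "\<dots> = sel k (Q * N) (pick I) id * P" by (rule sel_mult_right[OF QN P pk])
  also have "sel k (Q * N) (pick I) id = rowsel k Q (pick I) * N" by (rule sel_mult_left[OF Q N pk])
  finally have "det (submatrix (Q * N * P) I J) = det (rowsel k Q (pick I) * N) * det P"
    using det_mult[of "rowsel k Q (pick I) * N" k P] rowsel_carrier[of k Q "pick I"] Q N P by simp
  moreover have "g dvd det (rowsel k Q (pick I) * N)"
    by (rule det_mult_dvd[OF N _ mins]) (use rowsel_carrier[of k Q "pick I"] Q in simp)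
  ultimately show "g dvd det (submatrix (Q * N * P) I J)" by simp
qed


lemma submatrix_sel2:
  assumes I: "I \<subseteq> {..<dim_row A}" "card I = t" and J: "J \<subseteq> {..<dim_col A}" "card J = t"
  shows "submatrix A I J = sel t A (pick I) (pick J)"
proof -
  have e1: "{i. i < dim_row A \<and> i \<in> I} = I" using I by auto
  have e2: "{i. i < dim_col A \<and> i \<in> J} = J" using J by auto
  show ?thesis
  proof (rule eq_matI)
    fix i j assume "i < dim_row (sel t A (pick I) (pick J))" "j < dim_col (sel t A (pick I) (pick J))"
    then have ij: "i < t" "j < t" by auto
    have "submatrix A I J $$ (i,j) = A $$ (pick I i, pick J j)"
      by (rule submatrix_index) (use ij e1 e2 I J in simp_all)
    then show "submatrix A I J $$ (i,j) = sel t A (pick I) (pick J) $$ (i,j)"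
      using ij by simp
  qed (use e1 e2 I J in \<open>simp_all add: dim_submatrix\<close>)
qed

lemma minors_dvd_det_divisor: "minors_dvd (det_divisor A t) A t"
proof (cases "t = 0")
  case True
  then show ?thesis unfolding minors_dvd_def det_divisor_def by simp
next
  case False
  then show ?thesis unfolding minors_dvd_def det_divisor_def
    by (auto intro!: Gcd_dvd)
qed

lemma dvd_det_divisor:
  assumes "minors_dvd g A t" "t > 0"
  shows "g dvd det_divisor A t"
  using assms unfolding minors_dvd_def det_divisor_def
  by (auto intro!: Gcd_greatest)

lemma laplace_dvd:
  assumes mins: "minors_dvd g A s"
    and f: "\<And>r. r < Suc s \<Longrightarrow> f r < dim_row A" and h: "\<And>c. c < Suc s \<Longrightarrow> h c < dim_col A"
  shows "g dvd det (sel (Suc s) A f h)"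
proof -
  let ?X = "sel (Suc s) A f h"
  have "det ?X = (\<Sum>j<Suc s. ?X $$ (0,j) * cofactor ?X 0 j)"
    by (rule laplace_expansion_row) auto
  also have "g dvd \<dots>"
  proof (rule dvd_sum)
    fix j assume j: "j \<in> {..<Suc s}"
    have "mat_delete ?X 0 j = sel s A (\<lambda>r. f (Suc r)) (\<lambda>c. h (if c < j then c else Suc c))"
    proof (rule eq_matI)
      fix r c assume "r < dim_row (sel s A (\<lambda>r. f (Suc r)) (\<lambda>c. h (if c < j then c else Suc c)))"
        "c < dim_col (sel s A (\<lambda>r. f (Suc r)) (\<lambda>c. h (if c < j then c else Suc c)))"
      then have rc: "r < s" "c < s" by auto
      then show "mat_delete ?X 0 j $$ (r, c) = sel s A (\<lambda>r. f (Suc r)) (\<lambda>c. h (if c < j then c else Suc c)) $$ (r, c)"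
        unfolding mat_delete_def using j by auto
    qed (auto simp: mat_delete_def)
    moreover have "g dvd det (sel s A (\<lambda>r. f (Suc r)) (\<lambda>c. h (if c < j then c else Suc c)))"
      by (rule sel_dvd'[OF mins]) (use f h in auto)
    ultimately show "g dvd ?X $$ (0,j) * cofactor ?X 0 j" unfolding cofactor_def by simp
  qed
  finally show ?thesis .
qed

lemma det_divisor_dvd_Suc: "det_divisor A s dvd det_divisor A (Suc s)"
proof (rule dvd_det_divisor)
  show "minors_dvd (det_divisor A s) A (Suc s)"
    unfolding minors_dvd_def
  proof (intro allI impI)
    fix I J assume I: "I \<subseteq> {..<dim_row A}" and J: "J \<subseteq> {..<dim_col A}" and cI: "card I = Suc s" and cJ: "card J = Suc s"
    have "submatrix A I J = sel (Suc s) A (pick I) (pick J)" by (rule submatrix_sel2[OF I cI J cJ])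
    moreover have "det_divisor A s dvd det (sel (Suc s) A (pick I) (pick J))"
      by (rule laplace_dvd[OF minors_dvd_det_divisor]) (use pick_lt[OF I cI] pick_lt[OF J cJ] in auto)
    ultimately show "det_divisor A s dvd det (submatrix A I J)" by simp
  qed
qed simp

lemma prod_inv_factor:
  assumes nz: "\<And>i. 1 \<le> i \<Longrightarrow> i \<le> k \<Longrightarrow> det_divisor A i \<noteq> 0"
  shows "(\<Prod>i = 1..k. inv_factor A i) = det_divisor A k"
  using nz
proof (induction k)
  case 0
  then show ?case by (simp add: det_divisor_def)
next
  case (Suc k)
  have "(\<Prod>i = 1..Suc k. inv_factor A i) = (\<Prod>i = 1..k. inv_factor A i) * inv_factor A (Suc k)"
    by (simp add: prod.nat_ivl_Suc')
  also have "(\<Prod>i = 1..k. inv_factor A i) = det_divisor A k" using Suc by simp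
  also have "det_divisor A k * inv_factor A (Suc k) = det_divisor A (Suc k)"
    unfolding inv_factor_def using det_divisor_dvd_Suc[of A k] by simp
  finally show ?case .
qed

lemma charmat_carrier[simp]: "charmat B \<in> carrier_mat (dim_row B) (dim_col B)"
  unfolding charmat_def by simp

lemma charmat_dim[simp]: "dim_row (charmat B) = dim_row B" "dim_col (charmat B) = dim_col B"
  unfolding charmat_def by simp_all

lemma charmat_index[simp]: "i < dim_row B \<Longrightarrow> j < dim_col B \<Longrightarrow>
   charmat B $$ (i,j) = (if i = j then [:0, 1:] else 0) - [: B $$ (i,j) :]"
  unfolding charmat_def by simp

lemma det_divisor_charmat_nz:
  fixes B :: "'a::field_gcd mat"
  assumes B: "B \<in> carrier_mat n k" and kn: "k \<le> n" and i: "1 \<le> i" "i \<le> k"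
  shows "det_divisor (charmat B) i \<noteq> 0"
proof
  assume z: "det_divisor (charmat B) i = 0"
  let ?Bi = "mat i i (\<lambda>(r,c). B $$ (r,c))"
  have sub: "{..<i} \<subseteq> {..<dim_row (charmat B)}" "{..<i} \<subseteq> {..<dim_col (charmat B)}"
    using B kn i by auto
  have "submatrix (charmat B) {..<i} {..<i} = char_poly_matrix ?Bi"
  proof -
    have "submatrix (charmat B) {..<i} {..<i} = sel i (charmat B) (pick {..<i}) (pick {..<i})"
      by (rule submatrix_sel2) (use sub in auto)
    also have "\<dots> = char_poly_matrix ?Bi"
    proof (rule eq_matI)
      fix r c assume "r < dim_row (char_poly_matrix ?Bi)" "c < dim_col (char_poly_matrix ?Bi)"
      then have rc: "r < i" "c < i" by (auto simp: char_poly_matrix_def)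
      then show "sel i (charmat B) (pick {..<i}) (pick {..<i}) $$ (r, c) = char_poly_matrix ?Bi $$ (r, c)"
        using B kn i pick_lessThan[OF rc(1)] pick_lessThan[OF rc(2)]
        by (auto simp: char_poly_matrix_def)
    qed (auto simp: char_poly_matrix_def)
    finally show ?thesis .
  qed
  then have "det (submatrix (charmat B) {..<i} {..<i}) = char_poly ?Bi" by (simp add: char_poly_def)
  moreover have "char_poly ?Bi \<noteq> 0"
    using degree_monic_char_poly[of ?Bi i] by auto
  moreover have "det (submatrix (charmat B) {..<i} {..<i}) = 0"
    using z minors_dvd_det_divisor[of "charmat B" i] sub unfolding minors_dvd_def
    by (metis card_lessThan dvd_0_left_iff)
  ultimately show False by simp
qed


lemma mat_delete_sel_last:
  "c < Suc u \<Longrightarrow> mat_delete (sel (Suc u) N (\<lambda>r. if r < u then f r else i) id) u c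
     = sel u N f (\<lambda>c'. if c' < c then c' else Suc c')"
  by (rule eq_matI) (auto simp: mat_delete_def)

lemma cofactor_vec:
  fixes N :: "'a::comm_ring_1 mat"
  assumes N: "N \<in> carrier_mat s t" and np: "\<not> p dvd 1"
    and H: "\<And>f. (\<And>r. r < t \<Longrightarrow> f r < s) \<Longrightarrow> p dvd det (sel t N f id)"
  shows "\<exists>v \<in> carrier_vec t. (\<exists>j<t. \<not> p dvd v $ j) \<and> (\<forall>i<s. p dvd (N *\<^sub>v v) $ i)"
  using N H
proof (induction t arbitrary: N)
  case 0
  have "p dvd det (sel 0 N id id)" by (rule 0(2)) auto
  moreover have "det (sel 0 N id id) = 1" by (rule det_dim_zero) simp
  ultimately show ?case using np by simp
next
  case (Suc u)
  let ?N' = "mat s u (\<lambda>(i,j). N $$ (i,j))"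
  have N': "?N' \<in> carrier_mat s u" by simp
  show ?case
  proof (cases "\<forall>f. (\<forall>r<u. f r < s) \<longrightarrow> p dvd det (sel u ?N' f id)")
    case True
    then obtain v' where v': "v' \<in> carrier_vec u" "\<exists>j<u. \<not> p dvd v' $ j" "\<forall>i<s. p dvd (?N' *\<^sub>v v') $ i"
      using Suc.IH[OF N'] by blast
    define v where "v = vec (Suc u) (\<lambda>j. if j < u then v' $ j else 0)"
    have v: "v \<in> carrier_vec (Suc u)" unfolding v_def by simp
    have "\<forall>i<s. (N *\<^sub>v v) $ i = (?N' *\<^sub>v v') $ i"
    proof (intro allI impI)
      fix i assume i: "i < s"
      have "(N *\<^sub>v v) $ i = (\<Sum>j\<in>{0..<Suc u}. N $$ (i,j) * v $ j)"
        using i Suc.prems(1) v by (simp add: scalar_prod_def)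
      also have "\<dots> = (\<Sum>j\<in>{0..<u}. N $$ (i,j) * v' $ j)"
        by (simp add: v_def)
      also have "\<dots> = (?N' *\<^sub>v v') $ i"
        using i v' by (simp add: scalar_prod_def)
      finally show "(N *\<^sub>v v) $ i = (?N' *\<^sub>v v') $ i" .
    qed
    moreover have "\<exists>j<Suc u. \<not> p dvd v $ j"
    proof -
      obtain j where j: "j < u" "\<not> p dvd v' $ j" using v'(2) by auto
      then have "v $ j = v' $ j" by (simp add: v_def)
      then show ?thesis using j by (intro exI[of _ j]) auto
    qed
    ultimately show ?thesis using v v'(3) by auto
  next
    case False
    then obtain f where f: "\<And>r. r < u \<Longrightarrow> f r < s" and nd: "\<not> p dvd det (sel u ?N' f id)" by auto
    define g where "g = (\<lambda>i r. if r < u then f r else i)"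
    define v where "v = vec (Suc u) (\<lambda>c. cofactor (sel (Suc u) N (g 0) id) u c)"
    have v: "v \<in> carrier_vec (Suc u)" unfolding v_def by simp
    have cof: "cofactor (sel (Suc u) N (g i) id) u c = cofactor (sel (Suc u) N (g 0) id) u c"
      if "c < Suc u" for i c
      unfolding cofactor_def g_def mat_delete_sel_last[OF that] ..
    have "\<forall>i<s. p dvd (N *\<^sub>v v) $ i"
    proof (intro allI impI)
      fix i assume i: "i < s"
      have "(N *\<^sub>v v) $ i = (\<Sum>c\<in>{0..<Suc u}. N $$ (i,c) * v $ c)"
        using i Suc.prems(1) v by (simp add: scalar_prod_def)
      also have "\<dots> = (\<Sum>c<Suc u. sel (Suc u) N (g i) id $$ (u,c) * cofactor (sel (Suc u) N (g i) id) u c)"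
      proof (rule sum.cong)
        fix c assume "c \<in> {..<Suc u}"
        then have c: "c < Suc u" by simp
        have "v $ c = cofactor (sel (Suc u) N (g i) id) u c" using c cof[OF c, of i] by (simp add: v_def)
        moreover have "sel (Suc u) N (g i) id $$ (u,c) = N $$ (i,c)" using c by (simp add: g_def)
        ultimately show "N $$ (i,c) * v $ c = sel (Suc u) N (g i) id $$ (u,c) * cofactor (sel (Suc u) N (g i) id) u c"
          by simp
      qed auto
      also have "\<dots> = det (sel (Suc u) N (g i) id)"
        by (rule laplace_expansion_row[symmetric]) auto
      finally have "(N *\<^sub>v v) $ i = det (sel (Suc u) N (g i) id)" .
      moreover have "p dvd det (sel (Suc u) N (g i) id)"
        by (rule Suc.prems(2)) (use f i in \<open>auto simp: g_def\<close>)
      ultimately show "p dvd (N *\<^sub>v v) $ i" by simp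
    qed
    moreover have "v $ u = det (sel u ?N' f id)"
    proof -
      have "v $ u = cofactor (sel (Suc u) N (g 0) id) u u" by (simp add: v_def)
      also have "\<dots> = det (sel u N f (\<lambda>c'. if c' < u then c' else Suc c'))"
        unfolding cofactor_def g_def mat_delete_sel_last[OF lessI] by simp
      also have "sel u N f (\<lambda>c'. if c' < u then c' else Suc c') = sel u ?N' f id"
        using f by (intro eq_matI) auto
      finally show ?thesis .
    qed
    ultimately have "(\<exists>j<Suc u. \<not> p dvd v $ j) \<and> (\<forall>i<s. p dvd (N *\<^sub>v v) $ i)"
      using nd by auto
    then show ?thesis using v by blast
  qed
qed


definition Kmat :: "nat \<Rightarrow> 'a::comm_ring_1 mat \<Rightarrow> 'a mat" where
  "Kmat m A = mat (dim_row A) (dim_col A) (\<lambda>(i,j). if j < m then (if i = j then 1 else 0) else A $$ (i,j))"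

definition Dmat :: "nat \<Rightarrow> 'a::comm_ring_1 mat \<Rightarrow> 'a mat" where
  "Dmat m A = mat (dim_col A) (dim_col A) (\<lambda>(i,j). if i < m \<and> j < m then A $$ (i,j) else if i = j then 1 else 0)"

lemma KD_mult:
  assumes A: "A \<in> carrier_mat n k" and mk: "m \<le> k" "k \<le> n"
    and zero: "\<And>i j. j < m \<Longrightarrow> m \<le> i \<Longrightarrow> i < n \<Longrightarrow> A $$ (i,j) = 0"
  shows "A = Kmat m A * Dmat m A"
proof (rule eq_matI)
  fix i j assume "i < dim_row (Kmat m A * Dmat m A)" "j < dim_col (Kmat m A * Dmat m A)"
  then have ij: "i < n" "j < k" using A by (auto simp: Kmat_def Dmat_def)
  have "(Kmat m A * Dmat m A) $$ (i,j) = (\<Sum>l\<in>{0..<k}. Kmat m A $$ (i,l) * Dmat m A $$ (l,j))"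
    using ij A by (simp add: Kmat_def Dmat_def scalar_prod_def)
  also have "\<dots> = (\<Sum>l\<in>{0..<k}. if l = (if j < m then i else j) then A $$ (i,j) else 0)"
  proof (rule sum.cong[OF refl])
    fix l assume l: "l \<in> {0..<k}"
    show "Kmat m A $$ (i,l) * Dmat m A $$ (l,j) = (if l = (if j < m then i else j) then A $$ (i,j) else 0)"
    proof (cases "j < m")
      case True
      then show ?thesis using l ij A zero[of j i] zero[of j l] mk by (auto simp: Kmat_def Dmat_def)
    next
      case False
      then show ?thesis using l ij A mk by (auto simp: Kmat_def Dmat_def)
    qed
  qed
  also have "\<dots> = A $$ (i,j)"
  proof (cases "j < m")
    case True
    then show ?thesis
    proof (cases "i < k")
      case True
      then show ?thesis using \<open>j < m\<close> by (simp add: sum.delta')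
    next
      case False
      then have "A $$ (i,j) = 0" using zero[of j i] ij \<open>j < m\<close> mk by auto
      then show ?thesis by simp
    qed
  next
    case False
    then show ?thesis using ij by (simp add: sum.delta')
  qed
  finally show "A $$ (i,j) = (Kmat m A * Dmat m A) $$ (i,j)" by simp
qed (use A in \<open>auto simp: Kmat_def Dmat_def\<close>)

lemma det_Dmat:
  fixes A :: "'a::idom mat"
  assumes A: "A \<in> carrier_mat n k" and mk: "m \<le> k"
  shows "det (Dmat m A) = det (mat m m (\<lambda>(i,j). A $$ (i,j)))"
proof -
  have "Dmat m A = four_block_mat (mat m m (\<lambda>(i,j). A $$ (i,j))) (0\<^sub>m m (k-m)) (0\<^sub>m (k-m) m) (1\<^sub>m (k-m))"
    by (rule eq_matI) (use A mk in \<open>auto simp: Dmat_def\<close>)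
  then show ?thesis
    by (simp add: det_four_block_mat_upper_right_zero[of _ m _ "k-m"])
qed

lemma det_selK:
  fixes A :: "'a::idom mat"
  assumes A: "A \<in> carrier_mat n k" and mk: "m \<le> k" "k \<le> n"
    and f: "\<And>r. r < k - m \<Longrightarrow> f r < n - m"
  shows "det (sel k (Kmat m A) (\<lambda>r. if r < m then r else m + f (r - m)) id)
       = det (sel (k-m) (mat (n-m) (k-m) (\<lambda>(i,j). A $$ (m+i, m+j))) f id)"
proof -
  let ?Z = "mat m (k-m) (\<lambda>(i,j). A $$ (i, m+j))"
  let ?S = "sel (k-m) (mat (n-m) (k-m) (\<lambda>(i,j). A $$ (m+i, m+j))) f id"
  have "sel k (Kmat m A) (\<lambda>r. if r < m then r else m + f (r - m)) id = four_block_mat (1\<^sub>m m) ?Z (0\<^sub>m (k-m) m) ?S"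
  proof (rule eq_matI)
    fix i j assume "i < dim_row (four_block_mat (1\<^sub>m m) ?Z (0\<^sub>m (k-m) m) ?S)"
      "j < dim_col (four_block_mat (1\<^sub>m m) ?Z (0\<^sub>m (k-m) m) ?S)"
    then have ij: "i < k" "j < k" using mk by auto
    show "sel k (Kmat m A) (\<lambda>r. if r < m then r else m + f (r - m)) id $$ (i, j) =
          four_block_mat (1\<^sub>m m) ?Z (0\<^sub>m (k-m) m) ?S $$ (i, j)"
    proof (cases "i < m")
      case True
      then show ?thesis using ij A mk by (auto simp: Kmat_def)
    next
      case False
      then have fi: "f (i - m) < n - m" using f[of "i-m"] ij by auto
      then show ?thesis using ij A mk False by (auto simp: Kmat_def)
    qed
  qed (use mk in auto)
  then show ?thesis
    by (simp add: det_four_block_mat_lower_left_zero[of _ m _ "k-m"])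
qed


lemma charmat_block_char_poly:
  fixes B :: "'a::field mat"
  assumes B: "B \<in> carrier_mat n k" and mk: "m \<le> k" "k \<le> n"
  shows "mat m m (\<lambda>(i,j). charmat B $$ (i,j)) = char_poly_matrix (mat m m (\<lambda>(i,j). B $$ (i,j)))"
  by (rule eq_matI) (use B mk in \<open>auto simp: char_poly_matrix_def\<close>)

lemma matrix_core:
  fixes B B' :: "'a::field_gcd mat"
  assumes B: "B \<in> carrier_mat n k" and B': "B' \<in> carrier_mat n k" and mk: "m \<le> k" "k \<le> n" "0 < k"
    and zero: "\<And>i j. j < m \<Longrightarrow> m \<le> i \<Longrightarrow> i < n \<Longrightarrow> B' $$ (i,j) = 0"
    and c1: "charmat B = Q * charmat B' * P" and Q: "Q \<in> carrier_mat n n" and P: "P \<in> carrier_mat k k"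
    and c2: "charmat B' = Q' * charmat B * P'" and Q': "Q' \<in> carrier_mat n n" and P': "P' \<in> carrier_mat k k"
  shows "m \<le> degree (det_divisor (charmat B) k)"
    and "m < degree (det_divisor (charmat B) k) \<Longrightarrow>
       \<exists>p w. 0 < degree p \<and> (\<forall>j<k-m. degree (w j) < degree p) \<and> (\<exists>j<k-m. w j \<noteq> 0) \<and>
          (\<forall>r<n-m. p dvd (\<Sum>j<k-m. ((if r = j then [:0,1:] else 0) - [:B' $$ (m+r, m+j):]) * w j))"
proof -
  let ?M = "charmat B" and ?M' = "charmat B'"
  let ?K = "Kmat m ?M'" and ?D = "Dmat m ?M'"
  define \<chi> where "\<chi> = char_poly (mat m m (\<lambda>(i,j). B' $$ (i,j)))"
  define \<delta> where "\<delta> = det_divisor ?M k"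
  have M: "?M \<in> carrier_mat n k" using B by (metis charmat_carrier carrier_matD)
  have M': "?M' \<in> carrier_mat n k" using B' by (metis charmat_carrier carrier_matD)
  have K: "?K \<in> carrier_mat n k" using B' by (simp add: Kmat_def)
  have D: "?D \<in> carrier_mat k k" using B' by (simp add: Dmat_def)
  have zM': "\<And>i j. j < m \<Longrightarrow> m \<le> i \<Longrightarrow> i < n \<Longrightarrow> ?M' $$ (i,j) = 0"
    using zero B' mk by auto
  have KD: "?M' = ?K * ?D" by (rule KD_mult[OF M' mk(1,2) zM'])
  have detD: "det ?D = \<chi>"
    unfolding det_Dmat[OF M' mk(1)] \<chi>_def char_poly_def charmat_block_char_poly[OF B' mk(1,2)] ..
  have chi: "degree \<chi> = m" "\<chi> \<noteq> 0"
    using degree_monic_char_poly[of "mat m m (\<lambda>(i,j). B' $$ (i,j))" m] unfolding \<chi>_def by auto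
  have selM': "det (sel k ?M' f id) = det (sel k ?K f id) * \<chi>" if f: "\<And>r. r < k \<Longrightarrow> f r < n" for f
  proof -
    have "sel k ?M' f id = sel k ?K f id * ?D"
      by (subst KD, rule sel_mult_right[OF K D f])
    then show ?thesis using det_mult[OF sel_carrier D] detD by simp
  qed
  have "minors_dvd \<chi> ?M k"
    unfolding minors_dvd_def
  proof (intro allI impI)
    fix I J assume I: "I \<subseteq> {..<dim_row ?M}" and J: "J \<subseteq> {..<dim_col ?M}" and cI: "card I = k" and cJ: "card J = k"
    have I': "I \<subseteq> {..<n}" using I B by simp
    have J': "J \<subseteq> {..<k}" using J B by simp
    have pk: "\<And>r. r < k \<Longrightarrow> pick I r < n" using pick_lt[OF I' cI] .
    have QM': "Q * ?M' \<in> carrier_mat n k" using Q M' by simp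
    have RQ: "rowsel k Q (pick I) \<in> carrier_mat k n" using rowsel_carrier[of k Q "pick I"] Q by simp
    have "submatrix ?M I J = sel k ?M (pick I) id" by (rule submatrix_sel[OF M I' cI J' cJ])
    also have "\<dots> = sel k (Q * ?M') (pick I) id * P" unfolding c1 by (rule sel_mult_right[OF QM' P pk])
    also have "sel k (Q * ?M') (pick I) id = rowsel k Q (pick I) * ?M'" by (rule sel_mult_left[OF Q M' pk])
    also have "rowsel k Q (pick I) * ?M' = (rowsel k Q (pick I) * ?K) * ?D"
      by (subst KD, rule assoc_mult_mat[symmetric, OF RQ K D])
    finally have eq: "submatrix ?M I J = (rowsel k Q (pick I) * ?K) * ?D * P" .
    have X: "rowsel k Q (pick I) * ?K \<in> carrier_mat k k" using RQ K by simp
    have "det (submatrix ?M I J) = det ((rowsel k Q (pick I) * ?K) * ?D * P)" using eq by simp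
    also have "\<dots> = det ((rowsel k Q (pick I) * ?K) * ?D) * det P"
      by (rule det_mult[OF _ P]) (use X D in simp)
    also have "det ((rowsel k Q (pick I) * ?K) * ?D) = det (rowsel k Q (pick I) * ?K) * det ?D"
      by (rule det_mult[OF X D])
    finally have "det (submatrix ?M I J) = det (rowsel k Q (pick I) * ?K) * \<chi> * det P"
      using detD by simp
    then show "\<chi> dvd det (submatrix ?M I J)" by simp
  qed
  then have chidvd: "\<chi> dvd \<delta>" unfolding \<delta>_def by (rule dvd_det_divisor) (use mk in simp)
  have dnz: "\<delta> \<noteq> 0" unfolding \<delta>_def by (rule det_divisor_charmat_nz[OF B mk(2)]) (use mk in auto)
  show "m \<le> degree (det_divisor ?M k)"
    using dvd_imp_degree_le[OF chidvd dnz] chi unfolding \<delta>_def by simp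
  assume gt: "m < degree (det_divisor ?M k)"
  define p where "p = \<delta> div \<chi>"
  have dp: "\<delta> = \<chi> * p" unfolding p_def using chidvd by simp
  have pnz: "p \<noteq> 0" using dp dnz by auto
  have degp: "0 < degree p" using degree_mult_eq[OF chi(2) pnz] dp gt chi unfolding \<delta>_def by simp
  have np: "\<not> p dvd 1"
  proof
    assume "p dvd 1"
    then have "is_unit p" by simp
    then have "degree p = 0" using is_unit_iff_degree[OF pnz] by simp
    then show False using degp by simp
  qed
  have mdM': "minors_dvd \<delta> ?M' k"
    unfolding c2 \<delta>_def by (rule minors_dvd_transfer[OF M Q' P' minors_dvd_det_divisor])
  let ?M2 = "mat (n-m) (k-m) (\<lambda>(i,j). ?M' $$ (m+i, m+j))"
  have M2: "?M2 \<in> carrier_mat (n-m) (k-m)" by simp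
  have H: "p dvd det (sel (k-m) ?M2 f id)" if f: "\<And>r. r < k - m \<Longrightarrow> f r < n - m" for f
  proof -
    let ?F = "\<lambda>r. if r < m then r else m + f (r - m)"
    have F: "\<And>r. r < k \<Longrightarrow> ?F r < n"
    proof -
      fix r assume r: "r < k"
      show "?F r < n"
      proof (cases "r < m")
        case True then show ?thesis using mk r by simp
      next
        case False
        then have "r - m < k - m" using r by simp
        then have "f (r-m) < n - m" by (rule f)
        then show ?thesis using False mk by simp
      qed
    qed
    have "\<delta> dvd det (sel k ?M' ?F id)"
      by (rule sel_dvd'[OF mdM']) (use F B' in auto)
    then have "\<chi> * p dvd \<chi> * det (sel k ?K ?F id)" using selM'[OF F] dp by (simp add: ac_simps)
    then have "p dvd det (sel k ?K ?F id)" using chi(2) by simp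
    moreover have "det (sel k ?K ?F id) = det (sel (k-m) ?M2 f id)"
      by (rule det_selK[OF M' mk(1,2)]) (rule f)
    ultimately show ?thesis by simp
  qed
  obtain v where v: "v \<in> carrier_vec (k-m)" and vnz: "\<exists>j<k-m. \<not> p dvd v $ j"
    and vd: "\<forall>i<n-m. p dvd (?M2 *\<^sub>v v) $ i"
    using cofactor_vec[OF M2 np H] by blast
  define w where "w = (\<lambda>j. v $ j mod p)"
  have "\<forall>j<k-m. degree (w j) < degree p"
  proof (intro allI impI)
    fix j
    show "degree (w j) < degree p"
    proof (cases "w j = 0")
      case True then show ?thesis using degp by simp
    next
      case False then show ?thesis unfolding w_def by (rule degree_mod_less'[OF pnz])
    qed
  qed
  moreover have "\<exists>j<k-m. w j \<noteq> 0" using vnz unfolding w_def by (auto simp: dvd_eq_mod_eq_0)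
  moreover have "\<forall>r<n-m. p dvd (\<Sum>j<k-m. ((if r = j then [:0,1:] else 0) - [:B' $$ (m+r, m+j):]) * w j)"
  proof (intro allI impI)
    fix r assume r: "r < n - m"
    let ?c = "\<lambda>j. (if r = j then [:0,1:] else 0) - [:B' $$ (m+r, m+j):]"
    have "(?M2 *\<^sub>v v) $ r = (\<Sum>j\<in>{0..<k-m}. ?M' $$ (m+r, m+j) * v $ j)"
      using r v by (simp add: scalar_prod_def)
    also have "\<dots> = (\<Sum>j<k-m. ?c j * v $ j)"
      unfolding atLeast0LessThan
    proof (rule sum.cong[OF refl])
      fix j assume "j \<in> {..<k-m}"
      then have "m + j < k" "m + r < n" using r mk by auto
      then show "?M' $$ (m+r, m+j) * v $ j = ?c j * v $ j" using B' by simp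
    qed
    also have "\<dots> = (\<Sum>j<k-m. ?c j * (p * (v $ j div p) + w j))"
      unfolding w_def by simp
    also have "\<dots> = (\<Sum>j<k-m. p * (?c j * (v $ j div p)) + ?c j * w j)"
      by (rule sum.cong) (simp_all add: algebra_simps smult_add_right)
    also have "\<dots> = p * (\<Sum>j<k-m. ?c j * (v $ j div p)) + (\<Sum>j<k-m. ?c j * w j)"
      by (simp add: sum.distrib sum_distrib_left)
    finally have "(\<Sum>j<k-m. ?c j * w j) = (?M2 *\<^sub>v v) $ r - p * (\<Sum>j<k-m. ?c j * (v $ j div p))"
      by simp
    moreover have "p dvd (?M2 *\<^sub>v v) $ r" using vd r by simp
    ultimately show "p dvd (\<Sum>j<k-m. ?c j * w j)" by simp
  qed
  ultimately show "\<exists>p w. 0 < degree p \<and> (\<forall>j<k-m. degree (w j) < degree p) \<and> (\<exists>j<k-m. w j \<noteq> 0) \<and>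
          (\<forall>r<n-m. p dvd (\<Sum>j<k-m. ((if r = j then [:0,1:] else 0) - [:B' $$ (m+r, m+j):]) * w j))"
    using degp by blast
qed


lemma sum_const_poly: "(\<Sum>i\<in>I. [:f i:]) = [:\<Sum>i\<in>I. f i:]"
  by (induction I rule: infinite_finite_induct) auto

lemma cp_t1: fixes q b :: "nat \<Rightarrow> 'a::field"
  shows "[:q r:] * ((if r = l then [:0,1:] else 0) - [:b r:]) = (if r = l then smult (q r) [:0,1:] else 0) - [:q r * b r:]"
  by (simp add: right_diff_distrib mult_to_poly)

lemma cp_t2: fixes q b :: "nat \<Rightarrow> 'a::field"
  shows "(\<Sum>r\<in>{0..<n}. [:q r:] * ((if r = l then [:0,1:] else 0) - [:b r:])) = smult (if l < n then q l else 0) [:0,1:] - [:\<Sum>r<n. q r * b r:]"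
  unfolding cp_t1 sum_subtractf
  by (simp add: sum.delta' sum_const_poly atLeast0LessThan)

lemma cp_t3: fixes q b :: "nat \<Rightarrow> 'a::field"
  shows "(\<Sum>l\<in>{0..<k}. (smult (q l) [:0,1:] - [:b l:]) * [:p l:]) = smult (\<Sum>l<k. q l * p l) [:0,1:] - [:\<Sum>l<k. b l * p l:]"
proof -
  have eq: "\<And>l. (smult (q l) [:0,1:] - [:b l:]) * [:p l:] = smult (q l * p l) [:0,1:] - [:b l * p l:]"
    by (simp add: left_diff_distrib mult_to_poly mult.commute)
  show ?thesis unfolding eq sum_subtractf atLeast0LessThan sum_const_poly smult_sum ..
qed

lemma charmat_change:
  fixes B B' :: "'a::field mat"
  assumes B: "B \<in> carrier_mat n k" and B': "B' \<in> carrier_mat n k"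
    and Q0: "Q0 \<in> carrier_mat n n" and P0: "P0 \<in> carrier_mat k k" and kn: "k \<le> n"
    and eqB: "\<And>i j. i < n \<Longrightarrow> j < k \<Longrightarrow> B $$ (i,j) = (\<Sum>l<k. \<Sum>r<n. Q0 $$ (i,r) * B' $$ (r,l) * P0 $$ (l,j))"
    and eqJ: "\<And>i j. i < n \<Longrightarrow> j < k \<Longrightarrow> (\<Sum>l<k. Q0 $$ (i,l) * P0 $$ (l,j)) = (if i = j then 1 else 0)"
  shows "charmat B = map_mat (\<lambda>a. [:a:]) Q0 * charmat B' * map_mat (\<lambda>a. [:a:]) P0"
proof (rule eq_matI)
  let ?Q = "map_mat (\<lambda>a. [:a:]) Q0" and ?P = "map_mat (\<lambda>a. [:a:]) P0"
  fix i j assume "i < dim_row (?Q * charmat B' * ?P)" "j < dim_col (?Q * charmat B' * ?P)"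
  then have ij: "i < n" "j < k" using Q0 P0 by auto
  have QM: "(?Q * charmat B') $$ (i,l) = smult (Q0 $$ (i,l)) [:0,1:] - [:\<Sum>r<n. Q0 $$ (i,r) * B' $$ (r,l):]"
    if l: "l < k" for l
  proof -
    have "(?Q * charmat B') $$ (i,l) = (\<Sum>r\<in>{0..<n}. [:Q0 $$ (i,r):] * ((if r = l then [:0,1:] else 0) - [:B' $$ (r,l):]))"
      using ij l Q0 B' by (simp add: scalar_prod_def)
    also have "\<dots> = smult (if l < n then Q0 $$ (i,l) else 0) [:0,1:] - [:\<Sum>r<n. Q0 $$ (i,r) * B' $$ (r,l):]"
      by (rule cp_t2)
    finally show ?thesis using l kn by simp
  qed
  have "(?Q * charmat B' * ?P) $$ (i,j) = (\<Sum>l\<in>{0..<k}. (?Q * charmat B') $$ (i,l) * [:P0 $$ (l,j):])"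
    using ij Q0 P0 B' by (simp add: scalar_prod_def)
  also have "\<dots> = (\<Sum>l\<in>{0..<k}. (smult (Q0 $$ (i,l)) [:0,1:] - [:\<Sum>r<n. Q0 $$ (i,r) * B' $$ (r,l):]) * [:P0 $$ (l,j):])"
    by (rule sum.cong[OF refl]) (simp add: QM)
  also have "\<dots> = smult (\<Sum>l<k. Q0 $$ (i,l) * P0 $$ (l,j)) [:0,1:] - [:\<Sum>l<k. (\<Sum>r<n. Q0 $$ (i,r) * B' $$ (r,l)) * P0 $$ (l,j):]"
    by (rule cp_t3)
  also have "\<dots> = (if i = j then [:0,1:] else 0) - [:B $$ (i,j):]"
    using eqJ[OF ij] eqB[OF ij] by (simp add: sum_distrib_right)
  also have "\<dots> = charmat B $$ (i,j)" using ij B by simp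
  finally show "charmat B $$ (i,j) = (?Q * charmat B' * ?P) $$ (i,j)" by simp
qed (use B Q0 P0 in auto)




lemma degree_sum_less:
  fixes f :: "'c \<Rightarrow> 'x::comm_ring_1 poly"
  assumes "finite S" "0 < d" "\<And>i. i \<in> S \<Longrightarrow> degree (f i) < d"
  shows "degree (sum f S) < d"
  using assms(1,3)
proof (induction S rule: finite_induct)
  case empty then show ?case using assms(2) by simp
next
  case (insert a F)
  then have "degree (f a) < d" "degree (sum f F) < d" by auto
  then have "degree (f a + sum f F) < d" using degree_add_le_max[of "f a" "sum f F"] by linarith
  then show ?case using insert by simp
qed

lemma sum_if_ge: "(\<Sum>i<(k::nat). if m \<le> i then f i else 0) = (\<Sum>i\<in>{m..<k}. f i)"
proof -
  have "(\<Sum>i<k. if m \<le> i then f i else 0) = sum f {i \<in> {..<k}. m \<le> i}"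
    by (rule sum.inter_filter[symmetric]) simp
  also have "{i \<in> {..<k}. m \<le> i} = {m..<k}" by auto
  finally show ?thesis .
qed

lemma sum_ext_lt: "(k::nat) \<le> n \<Longrightarrow> (\<Sum>i<k. f i) = (\<Sum>i<n. if i < k then f i else 0)"
proof -
  assume kn: "k \<le> n"
  have "(\<Sum>i<n. if i < k then f i else 0) = sum f {i \<in> {..<n}. i < k}"
    by (rule sum.inter_filter[symmetric]) simp
  also have "{i \<in> {..<n}. i < k} = {..<k}" using kn by auto
  finally show ?thesis by simp
qed

context vector_space
begin

lemma sum_set_list: "distinct bs \<Longrightarrow> (\<Sum>b\<in>set bs. g b) = (\<Sum>i<length bs. g (bs!i))"
proof -
  assume d: "distinct bs"
  have "set bs = (\<lambda>i. bs ! i) ` {..<length bs}" by (auto simp: in_set_conv_nth)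
  moreover have "inj_on (\<lambda>i. bs ! i) {..<length bs}" using d by (simp add: inj_on_def nth_eq_iff_index_eq)
  ultimately show ?thesis by (simp add: sum.reindex)
qed

lemma list_sum_rep:
  assumes "distinct bs" "independent (set bs)" "x \<in> span (set bs)"
  shows "(\<Sum>i<length bs. scale (representation (set bs) x (bs!i)) (bs!i)) = x"
proof -
  have "(\<Sum>b\<in>set bs. scale (representation (set bs) x b) b) = (\<Sum>i<length bs. scale (representation (set bs) x (bs!i)) (bs!i))"
    by (rule sum_set_list[OF assms(1)])
  moreover have "(\<Sum>b\<in>set bs. scale (representation (set bs) x b) b) = x"
    by (rule sum_representation_eq) (use assms in auto)
  ultimately show ?thesis by simp
qed

lemma rep_scale_sum:
  assumes "independent basis" "finite I" "\<And>i. i \<in> I \<Longrightarrow> x i \<in> span basis"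
  shows "representation basis (\<Sum>i\<in>I. scale (c i) (x i)) b = (\<Sum>i\<in>I. c i * representation basis (x i) b)"
proof -
  have "representation basis (\<Sum>i\<in>I. scale (c i) (x i)) b = (\<Sum>i\<in>I. representation basis (scale (c i) (x i)) b)"
    using representation_sum[of basis I "\<lambda>i. scale (c i) (x i)"] assms span_scale by auto
  also have "\<dots> = (\<Sum>i\<in>I. c i * representation basis (x i) b)"
    using representation_scale assms by (intro sum.cong) auto
  finally show ?thesis .
qed

lemma rep_list_sum:
  assumes d: "distinct bs" and ind: "independent (set bs)" and j: "j < length bs"
  shows "representation (set bs) (\<Sum>i<length bs. scale (c i) (bs!i)) (bs!j) = c j"
proof -
  have "representation (set bs) (\<Sum>i<length bs. scale (c i) (bs!i)) (bs!j)
      = (\<Sum>i<length bs. c i * representation (set bs) (bs!i) (bs!j))"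
    by (rule rep_scale_sum) (use ind in \<open>auto intro: span_base\<close>)
  also have "\<dots> = (\<Sum>i<length bs. if i = j then c i else 0)"
  proof (rule sum.cong[OF refl])
    fix i assume i: "i \<in> {..<length bs}"
    have "representation (set bs) (bs!i) = (\<lambda>v. if v = bs!i then 1 else 0)"
      by (rule representation_basis[OF ind]) (use i in simp)
    moreover have "(bs!j = bs!i) = (i = j)" using d i j by (auto simp: nth_eq_iff_index_eq)
    ultimately show "c i * representation (set bs) (bs!i) (bs!j) = (if i = j then c i else 0)" by simp
  qed
  also have "\<dots> = c j" using j by simp
  finally show ?thesis .
qed

lemma rep_outside:
  assumes ind: "independent B" and S: "S \<subseteq> B" and x: "x \<in> span S" and b: "b \<notin> S"
  shows "representation B x b = 0"
proof -
  have "representation B x = representation S x" by (rule representation_extend[OF ind x S])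
  then show ?thesis using representation_ne_zero[of S x b] b by auto
qed

lemma lin_zero:
  fixes T :: "'b \<Rightarrow> 'b"
  assumes W: "subspace W" and add: "\<forall>x\<in>W. \<forall>y\<in>W. T (x + y) = T x + T y"
  shows "T 0 = 0"
proof -
  have "0 \<in> W" using W by (simp add: subspace_def)
  then have "T (0 + 0) = T 0 + T 0" using add by blast
  then have "T 0 + 0 = T 0 + T 0" by simp
  then have "0 = T 0" by (rule add_left_imp_eq)
  then show ?thesis by simp
qed

lemma lin_sum:
  fixes T :: "'b \<Rightarrow> 'b"
  assumes W: "subspace W" and add: "\<forall>x\<in>W. \<forall>y\<in>W. T (x + y) = T x + T y"
    and sc: "\<forall>c. \<forall>x\<in>W. T (scale c x) = scale c (T x)"
    and fin: "finite I" and xW: "\<And>i. i \<in> I \<Longrightarrow> x i \<in> W"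
  shows "T (\<Sum>i\<in>I. scale (c i) (x i)) = (\<Sum>i\<in>I. scale (c i) (T (x i)))"
  using fin xW
proof (induction I rule: finite_induct)
  case empty
  then show ?case using lin_zero[OF W add] by simp
next
  case (insert a F)
  have a: "scale (c a) (x a) \<in> W" using insert W by (simp add: subspace_def)
  have F: "(\<Sum>i\<in>F. scale (c i) (x i)) \<in> W" using insert W
    by (intro subspace_sum) (auto simp: subspace_def)
  have "T (\<Sum>i\<in>insert a F. scale (c i) (x i)) = T (scale (c a) (x a) + (\<Sum>i\<in>F. scale (c i) (x i)))"
    using insert by simp
  also have "\<dots> = T (scale (c a) (x a)) + T (\<Sum>i\<in>F. scale (c i) (x i))" using add a F by blast
  also have "T (scale (c a) (x a)) = scale (c a) (T (x a))" using sc insert by simp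
  finally show ?case using insert by simp
qed

lemma inv_span:
  fixes T :: "'b \<Rightarrow> 'b"
  assumes W: "subspace W" and add: "\<forall>x\<in>W. \<forall>y\<in>W. T (x + y) = T x + T y"
    and sc: "\<forall>c. \<forall>x\<in>W. T (scale c x) = scale c (T x)"
    and SW: "S \<subseteq> W" and TS: "\<And>s. s \<in> S \<Longrightarrow> T s \<in> span S"
    and x: "x \<in> span S"
  shows "x \<in> W \<and> T x \<in> span S"
  using x
proof (induction rule: span_induct_alt)
  case base
  then show ?case using lin_zero[OF W add] W span_zero by (simp add: subspace_def)
next
  case (step c x y)
  have xW: "x \<in> W" using step SW by auto
  have cx: "scale c x \<in> W" using xW W by (simp add: subspace_def)
  have "T (scale c x + y) = T (scale c x) + T y" using add cx step by blast
  also have "\<dots> = scale c (T x) + T y" using sc xW by simp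
  finally have "T (scale c x + y) = scale c (T x) + T y" .
  moreover have "scale c (T x) + T y \<in> span S"
    using TS[OF step(1)] step(2) by (intro span_add span_scale) auto
  moreover have "scale c x + y \<in> W" using cx step(2) W by (simp add: subspace_def)
  ultimately show ?case by simp
qed

lemma max_inv_exists:
  fixes T :: "'b \<Rightarrow> 'b"
  assumes W: "subspace W" and add: "\<forall>x\<in>W. \<forall>y\<in>W. T (x + y) = T x + T y"
    and sc: "\<forall>c. \<forall>x\<in>W. T (scale c x) = scale c (T x)"
  shows "subspace (max_inv_subspace scale W T)" "max_inv_subspace scale W T \<subseteq> W"
    "T ` max_inv_subspace scale W T \<subseteq> max_inv_subspace scale W T"
    "\<And>U. subspace U \<Longrightarrow> U \<subseteq> W \<Longrightarrow> T ` U \<subseteq> U \<Longrightarrow> U \<subseteq> max_inv_subspace scale W T"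
proof -
  define Pr where "Pr U \<longleftrightarrow> subspace U \<and> U \<subseteq> W \<and> T ` U \<subseteq> U" for U
  define S where "S = \<Union>{U. Pr U}"
  define G where "G = span S"
  have SW: "S \<subseteq> W" unfolding S_def Pr_def by auto
  have TS: "T s \<in> span S" if "s \<in> S" for s
  proof -
    from that have "s \<in> \<Union>{U. Pr U}" by (simp add: S_def)
    then obtain U where "Pr U" "s \<in> U" by blast
    then have "T s \<in> S" unfolding S_def Pr_def by auto
    then show ?thesis by (rule span_base)
  qed
  have PG: "Pr G"
    unfolding Pr_def G_def
  proof (intro conjI)
    show "subspace (span S)" by simp
    show "span S \<subseteq> W" using inv_span[OF W add sc SW TS] by auto
    show "T ` span S \<subseteq> span S" using inv_span[OF W add sc SW TS] by auto
  qed
  have maxG: "U \<subseteq> G" if "Pr U" for U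
    using that unfolding G_def S_def by (auto intro: span_base)
  have "max_inv_subspace scale W T = G"
    unfolding max_inv_subspace_def Pr_def[symmetric]
    by (rule Greatest_equality) (use PG maxG in auto)
  then show "subspace (max_inv_subspace scale W T)" "max_inv_subspace scale W T \<subseteq> W"
    "T ` max_inv_subspace scale W T \<subseteq> max_inv_subspace scale W T"
    "\<And>U. subspace U \<Longrightarrow> U \<subseteq> W \<Longrightarrow> T ` U \<subseteq> U \<Longrightarrow> U \<subseteq> max_inv_subspace scale W T"
    using PG maxG unfolding Pr_def by auto
qed

lemma card_le_dim_spanning':
  assumes BV: "B \<subseteq> V"
    and VB: "V \<subseteq> span B"
    and fB: "finite B"
    and dVB: "dim V \<ge> card B"
  shows "independent B"
proof -
  {
    fix a
    assume a: "a \<in> B" "a \<in> span (B - {a})"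
    from a fB have c0: "card B \<noteq> 0"
      by auto
    from a fB have cb: "card (B - {a}) = card B - 1"
      by auto
    {
      fix x
      assume x: "x \<in> V"
      from a have eq: "insert a (B - {a}) = B"
        by blast
      from x VB have x': "x \<in> span B"
        by blast
      from span_trans[OF a(2), unfolded eq, OF x']
      have "x \<in> span (B - {a})" .
    }
    then have th1: "V \<subseteq> span (B - {a})"
      by blast
    have th2: "finite (B - {a})"
      using fB by auto
    from dim_le_card[OF th1 th2]
    have c: "dim V \<le> card (B - {a})" .
    from c c0 dVB cb have False by simp
  }
  then show ?thesis
    unfolding dependent_def by blast
qed


lemma mom_index:
  "i < length L \<Longrightarrow> j < k \<Longrightarrow> matrix_of_map scale L k T $$ (i,j) = representation (set L) (T (L!j)) (L!i)"
  unfolding matrix_of_map_def by simp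

lemma take_basis:
  assumes d: "distinct L" and ind: "independent (set L)" and x: "x \<in> span (set (take k L))" and kn: "k \<le> length L"
  shows "(\<Sum>l<k. scale (representation (set L) x (L!l)) (L!l)) = x"
proof -
  have d': "distinct (take k L)" using d by simp
  have S: "set (take k L) \<subseteq> set L" by (rule set_take_subset)
  have ind': "independent (set (take k L))" using ind S by (rule independent_mono)
  have "(\<Sum>l<length (take k L). scale (representation (set (take k L)) x (take k L!l)) (take k L!l)) = x"
    by (rule list_sum_rep[OF d' ind' x])
  moreover have "representation (set L) x = representation (set (take k L)) x"
    by (rule representation_extend[OF ind x S])
  moreover have "length (take k L) = k" using kn by simp
  moreover have "\<And>l. l < k \<Longrightarrow> take k L ! l = L ! l" by simp
  ultimately show ?thesis by simp
qed

lemma base_change: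
  fixes T :: "'b \<Rightarrow> 'b"
  assumes d1: "distinct L1" and i1: "independent (set L1)" and l1: "length L1 = n"
    and d2: "distinct L2" and i2: "independent (set L2)" and l2: "length L2 = n"
    and V: "span (set L1) = span (set L2)" and W: "span (set (take k L1)) = span (set (take k L2))"
    and kn: "k \<le> n"
    and TV: "T ` span (set (take k L1)) \<subseteq> span (set L1)"
    and add: "\<forall>x\<in>span (set (take k L1)). \<forall>y\<in>span (set (take k L1)). T (x + y) = T x + T y"
    and sc: "\<forall>c. \<forall>x\<in>span (set (take k L1)). T (scale c x) = scale c (T x)"
  defines "Q0 \<equiv> mat n n (\<lambda>(i,r). representation (set L1) (L2!r) (L1!i))"
    and "P0 \<equiv> mat k k (\<lambda>(l,j). representation (set L2) (L1!j) (L2!l))"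
  shows "\<And>i j. i < n \<Longrightarrow> j < k \<Longrightarrow> matrix_of_map scale L1 k T $$ (i,j) =
            (\<Sum>l<k. \<Sum>r<n. Q0 $$ (i,r) * matrix_of_map scale L2 k T $$ (r,l) * P0 $$ (l,j))"
    and "\<And>i j. i < n \<Longrightarrow> j < k \<Longrightarrow> (\<Sum>l<k. Q0 $$ (i,l) * P0 $$ (l,j)) = (if i = j then 1 else 0)"
proof -
  let ?W = "span (set (take k L1))"
  have WS: "subspace ?W" by simp
  have L1W: "L1 ! j \<in> ?W" if "j < k" for j
    using that kn l1 by (intro span_base) (auto simp: in_set_conv_nth)
  have L2W: "L2 ! l \<in> ?W" if "l < k" for l
    unfolding W using that kn l2 by (intro span_base) (auto simp: in_set_conv_nth)
  have L2V: "L2 ! r \<in> span (set L1)" if "r < n" for r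
    unfolding V using that l2 by (intro span_base) auto
  have exp: "L1 ! j = (\<Sum>l<k. scale (P0 $$ (l,j)) (L2!l))" if j: "j < k" for j
  proof -
    have "(\<Sum>l<k. scale (representation (set L2) (L1!j) (L2!l)) (L2!l)) = L1 ! j"
      by (rule take_basis[OF d2 i2]) (use L1W[OF j] W kn l2 in auto)
    moreover have "(\<Sum>l<k. scale (P0 $$ (l,j)) (L2!l)) = (\<Sum>l<k. scale (representation (set L2) (L1!j) (L2!l)) (L2!l))"
      using j by (intro sum.cong) (auto simp: P0_def)
    ultimately show ?thesis by simp
  qed
  have basis1: "representation (set L1) (L1!j) (L1!i) = (if i = j then 1 else 0)" if "i < n" "j < n" for i j
  proof -
    have "representation (set L1) (L1!j) = (\<lambda>v. if v = L1!j then 1 else 0)"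
      by (rule representation_basis[OF i1]) (use that l1 in simp)
    moreover have "(L1!i = L1!j) = (i = j)" using d1 that l1 by (auto simp: nth_eq_iff_index_eq)
    ultimately show ?thesis by simp
  qed
  show "(\<Sum>l<k. Q0 $$ (i,l) * P0 $$ (l,j)) = (if i = j then 1 else 0)" if ij: "i < n" "j < k" for i j
  proof -
    have "(\<Sum>l<k. Q0 $$ (i,l) * P0 $$ (l,j)) = (\<Sum>l<k. P0 $$ (l,j) * representation (set L1) (L2!l) (L1!i))"
      using ij kn by (intro sum.cong) (auto simp: Q0_def)
    also have "\<dots> = representation (set L1) (\<Sum>l<k. scale (P0 $$ (l,j)) (L2!l)) (L1!i)"
      by (rule rep_scale_sum[symmetric, OF i1]) (use L2V kn in auto)
    also have "\<dots> = representation (set L1) (L1!j) (L1!i)" using exp[OF ij(2)] by simp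
    also have "\<dots> = (if i = j then 1 else 0)" using basis1 ij kn by simp
    finally show ?thesis .
  qed
  show "matrix_of_map scale L1 k T $$ (i,j) =
            (\<Sum>l<k. \<Sum>r<n. Q0 $$ (i,r) * matrix_of_map scale L2 k T $$ (r,l) * P0 $$ (l,j))"
    if ij: "i < n" "j < k" for i j
  proof -
    have TL2V: "T (L2!l) \<in> span (set L1)" if "l < k" for l
      using TV L2W[OF that] by auto
    have "matrix_of_map scale L1 k T $$ (i,j) = representation (set L1) (T (L1!j)) (L1!i)"
      using ij l1 by (simp add: mom_index)
    also have "T (L1!j) = (\<Sum>l<k. scale (P0 $$ (l,j)) (T (L2!l)))"
      unfolding exp[OF ij(2)] by (rule lin_sum[OF WS add sc]) (use L2W in auto)
    also have "representation (set L1) \<dots> (L1!i) = (\<Sum>l<k. P0 $$ (l,j) * representation (set L1) (T (L2!l)) (L1!i))"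
      by (rule rep_scale_sum[OF i1]) (use TL2V in auto)
    also have "\<dots> = (\<Sum>l<k. \<Sum>r<n. Q0 $$ (i,r) * matrix_of_map scale L2 k T $$ (r,l) * P0 $$ (l,j))"
    proof (rule sum.cong[OF refl])
      fix l assume l: "l \<in> {..<k}"
      have "T (L2!l) = (\<Sum>r<n. scale (representation (set L2) (T (L2!l)) (L2!r)) (L2!r))"
        using list_sum_rep[OF d2 i2, of "T (L2!l)"] TL2V[of l] l V l2 by auto
      then have "representation (set L1) (T (L2!l)) (L1!i) =
          representation (set L1) (\<Sum>r<n. scale (representation (set L2) (T (L2!l)) (L2!r)) (L2!r)) (L1!i)"
        by simp
      also have "\<dots> = (\<Sum>r<n. representation (set L2) (T (L2!l)) (L2!r) * representation (set L1) (L2!r) (L1!i))"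
        by (rule rep_scale_sum[OF i1]) (use L2V in auto)
      also have "\<dots> = (\<Sum>r<n. Q0 $$ (i,r) * matrix_of_map scale L2 k T $$ (r,l))"
        using ij l l2 by (intro sum.cong) (auto simp: Q0_def mom_index)
      finally show "P0 $$ (l,j) * representation (set L1) (T (L2!l)) (L1!i) =
          (\<Sum>r<n. Q0 $$ (i,r) * matrix_of_map scale L2 k T $$ (r,l) * P0 $$ (l,j))"
        by (simp add: sum_distrib_left sum_distrib_right ac_simps)
    qed
    finally show ?thesis .
  qed
qed


lemma no_extra:
  fixes T :: "'b \<Rightarrow> 'b" and p :: "'a poly" and w :: "nat \<Rightarrow> 'a poly"
  assumes d: "distinct L" and ind: "independent (set L)" and lL: "length L = n"
    and mk: "m \<le> k" "k \<le> n"
    and TV: "T ` span (set (take k L)) \<subseteq> span (set L)"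
    and add: "\<forall>x\<in>span (set (take k L)). \<forall>y\<in>span (set (take k L)). T (x + y) = T x + T y"
    and sc: "\<forall>c. \<forall>x\<in>span (set (take k L)). T (scale c x) = scale c (T x)"
    and TU: "T ` span (set (take m L)) \<subseteq> span (set (take m L))"
    and maxU: "\<And>U'. subspace U' \<Longrightarrow> U' \<subseteq> span (set (take k L)) \<Longrightarrow> T ` U' \<subseteq> U' \<Longrightarrow> U' \<subseteq> span (set (take m L))"
    and degp: "0 < degree p"
    and wdeg: "\<And>i. i \<in> {m..<k} \<Longrightarrow> degree (w i) < degree p"
    and wnz: "iz \<in> {m..<k}" "w iz \<noteq> 0"
    and wdvd: "\<And>i. i \<in> {m..<n} \<Longrightarrow> p dvd (\<Sum>i'\<in>{m..<k}. ((if i = i' then [:0,1:] else 0) - [:representation (set L) (T (L!i')) (L!i):]) * w i')"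
  shows False
proof -
  obtain X :: "'a poly" where X: "X = [:0,1:]" by simp
  define W where "W = span (set (take k L))"
  define U where "U = span (set (take m L))"
  define \<beta> where "\<beta> i i' = representation (set L) (T (L!i')) (L!i)" for i i'
  define E where "E u i = (\<Sum>i'\<in>{m..<k}. ((if i = i' then X else 0) - [:\<beta> i i':]) * u i')" for u :: "nat \<Rightarrow> 'a poly" and i
  define A where "A u i = (\<Sum>i'\<in>{m..<k}. [:\<beta> i i':] * u i')" for u :: "nat \<Rightarrow> 'a poly" and i
  define Vs where "Vs = {u. (\<forall>i'\<in>{m..<k}. degree (u i') < degree p) \<and> (\<forall>i\<in>{m..<n}. p dvd E u i)}"
  define A' where "A' u = (\<lambda>i. if i \<in> {m..<k} then A u i else 0)" for u
  define z where "z u l = (\<Sum>i<k. scale (if m \<le> i then coeff (u i) l else 0) (L!i))" for u :: "nat \<Rightarrow> 'a poly" and l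
  have WS: "subspace W" unfolding W_def by simp
  have add': "\<forall>x\<in>W. \<forall>y\<in>W. T (x + y) = T x + T y" using add unfolding W_def .
  have sc': "\<forall>c. \<forall>x\<in>W. T (scale c x) = scale c (T x)" using sc unfolding W_def .
  have LW: "L!i \<in> W" if "i < k" for i
    unfolding W_def using that lL mk by (intro span_base) (auto simp: in_set_conv_nth)
  have LU: "L!i \<in> U" if "i < m" for i
    unfolding U_def using that lL mk by (intro span_base) (auto simp: in_set_conv_nth)
  have UW: "U \<subseteq> W" unfolding U_def W_def by (rule span_mono) (use mk in \<open>simp add: set_take_subset_set_take\<close>)
  have degA: "degree (A u i) < degree p" if "u \<in> Vs" for u i
    unfolding A_def
  proof (rule degree_sum_less)
    fix i' assume i': "i' \<in> {m..<k}"
    have "degree ([:\<beta> i i':] * u i') \<le> degree [:\<beta> i i':] + degree (u i')" by (rule degree_mult_le)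
    moreover have "degree (u i') < degree p" using that i' unfolding Vs_def by auto
    ultimately show "degree ([:\<beta> i i':] * u i') < degree p" by simp
  qed (use degp in auto)
  have F1: "A u i = 0" if u: "u \<in> Vs" and i: "i \<in> {k..<n}" for u i
  proof -
    have "E u i = (\<Sum>i'\<in>{m..<k}. - ([:\<beta> i i':] * u i'))"
      unfolding E_def using i by (intro sum.cong) auto
    also have "\<dots> = - A u i" unfolding A_def by (simp add: sum_negf)
    finally have "E u i = - A u i" .
    moreover have "p dvd E u i" using u i mk unfolding Vs_def by auto
    ultimately have pA: "p dvd A u i" by simp
    show "A u i = 0"
    proof (rule ccontr)
      assume "A u i \<noteq> 0"
      then have "degree p \<le> degree (A u i)" using pA by (rule dvd_imp_degree_le[rotated])
      then show False using degA[OF u, of i] by simp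
    qed
  qed
  have F2: "E u i = X * u i - A u i" if "i \<in> {m..<k}" for u i
  proof -
    have tw: "((if i = i' then X else 0) - [:\<beta> i i':]) * u i' = (if i = i' then X * u i' else 0) - [:\<beta> i i':] * u i'" for i'
      by (cases "i = i'") (auto simp: left_diff_distrib)
    have "E u i = (\<Sum>i'\<in>{m..<k}. (if i = i' then X * u i' else 0)) - A u i"
      unfolding E_def A_def tw sum_subtractf ..
    also have "(\<Sum>i'\<in>{m..<k}. (if i = i' then X * u i' else 0)) = X * u i"
      using that by (simp add: sum.delta)
    finally show ?thesis .
  qed
  have F3: "A' u \<in> Vs" if u: "u \<in> Vs" for u
  proof -
    have "\<forall>i'\<in>{m..<k}. degree (A' u i') < degree p" using degA[OF u] by (simp add: A'_def)
    moreover have "p dvd E (A' u) i" if i: "i \<in> {m..<n}" for i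
    proof -
      let ?c = "\<lambda>i'. (if i = i' then X else 0) - [:\<beta> i i':]"
      have AF2: "A u i' = X * u i' - E u i'" if "i' \<in> {m..<k}" for i' using F2[OF that, of u] by simp
      have "E (A' u) i = (\<Sum>i'\<in>{m..<k}. ?c i' * A' u i')" by (simp add: E_def)
      also have "\<dots> = (\<Sum>i'\<in>{m..<k}. ?c i' * (X * u i' - E u i'))"
        by (intro sum.cong) (auto simp: A'_def AF2)
      also have "\<dots> = (\<Sum>i'\<in>{m..<k}. X * (?c i' * u i') - ?c i' * E u i')"
        by (intro sum.cong) (simp_all only: right_diff_distrib mult.left_commute refl)
      also have "\<dots> = X * E u i - (\<Sum>i'\<in>{m..<k}. ?c i' * E u i')"
        unfolding sum_subtractf sum_distrib_left[symmetric] E_def ..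
      finally have eq: "E (A' u) i = X * E u i - (\<Sum>i'\<in>{m..<k}. ?c i' * E u i')" .
      have "p dvd E u i" using u i unfolding Vs_def by auto
      moreover have "p dvd (\<Sum>i'\<in>{m..<k}. ?c i' * E u i')"
        using u mk unfolding Vs_def by (intro dvd_sum dvd_mult) auto
      ultimately show ?thesis unfolding eq by simp
    qed
    ultimately show ?thesis unfolding Vs_def by auto
  qed
  have zW: "z u l \<in> W" for u l
    unfolding z_def W_def by (intro span_sum span_scale) (use LW[unfolded W_def] in auto)
  have zU: "z u l \<in> U" if "\<And>i. m \<le> i \<Longrightarrow> i < k \<Longrightarrow> coeff (u i) l = 0" for u l
    unfolding z_def U_def
  proof (intro span_sum)
    fix i assume i: "i \<in> {..<k}"
    show "scale (if m \<le> i then coeff (u i) l else 0) (L!i) \<in> span (set (take m L))"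
      using that i LU[unfolded U_def, of i] by (cases "m \<le> i") (auto intro: span_zero)
  qed
  have Tz: "T (z u l) = (\<Sum>i<n. scale (\<Sum>i'\<in>{m..<k}. coeff (u i') l * \<beta> i i') (L!i))" for u l
  proof -
    have TLV: "T (L!i') \<in> span (set L)" if "i' < k" for i'
      using TV LW[OF that] unfolding W_def by auto
    have "T (z u l) = (\<Sum>i'<k. scale (if m \<le> i' then coeff (u i') l else 0) (T (L!i')))"
      unfolding z_def by (rule lin_sum[OF WS add' sc']) (use LW in auto)
    also have "\<dots> = (\<Sum>i'<k. scale (if m \<le> i' then coeff (u i') l else 0) (\<Sum>i<n. scale (\<beta> i i') (L!i)))"
    proof (rule sum.cong[OF refl])
      fix i' assume "i' \<in> {..<k}"
      then have "(\<Sum>i<n. scale (\<beta> i i') (L!i)) = T (L!i')"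
        unfolding \<beta>_def using list_sum_rep[OF d ind TLV[of i']] lL by simp
      then show "scale (if m \<le> i' then coeff (u i') l else 0) (T (L!i')) =
        scale (if m \<le> i' then coeff (u i') l else 0) (\<Sum>i<n. scale (\<beta> i i') (L!i))" by simp
    qed
    also have "\<dots> = (\<Sum>i'<k. \<Sum>i<n. scale ((if m \<le> i' then coeff (u i') l else 0) * \<beta> i i') (L!i))"
      by (simp add: scale_sum_right)
    also have "\<dots> = (\<Sum>i<n. \<Sum>i'<k. scale ((if m \<le> i' then coeff (u i') l else 0) * \<beta> i i') (L!i))"
      by (rule sum.swap)
    also have "\<dots> = (\<Sum>i<n. scale (\<Sum>i'<k. (if m \<le> i' then coeff (u i') l else 0) * \<beta> i i') (L!i))"
      by (simp add: scale_sum_left)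
    also have "\<dots> = (\<Sum>i<n. scale (\<Sum>i'\<in>{m..<k}. coeff (u i') l * \<beta> i i') (L!i))"
    proof (rule sum.cong[OF refl])
      fix i
      have "(\<Sum>i'<k. (if m \<le> i' then coeff (u i') l else 0) * \<beta> i i') = (\<Sum>i'<k. if m \<le> i' then coeff (u i') l * \<beta> i i' else 0)"
        by (intro sum.cong) auto
      also have "\<dots> = (\<Sum>i'\<in>{m..<k}. coeff (u i') l * \<beta> i i')" by (rule sum_if_ge)
      finally show "scale (\<Sum>i'<k. (if m \<le> i' then coeff (u i') l else 0) * \<beta> i i') (L!i) =
         scale (\<Sum>i'\<in>{m..<k}. coeff (u i') l * \<beta> i i') (L!i)" by simp
    qed
    finally show ?thesis .
  qed
  have zext: "z u l = (\<Sum>i<n. scale (if m \<le> i \<and> i < k then coeff (u i) l else 0) (L!i))" for u l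
  proof -
    have "z u l = (\<Sum>i<n. if i < k then scale (if m \<le> i then coeff (u i) l else 0) (L!i) else 0)"
      unfolding z_def by (rule sum_ext_lt[OF mk(2)])
    also have "\<dots> = (\<Sum>i<n. scale (if m \<le> i \<and> i < k then coeff (u i) l else 0) (L!i))"
      by (intro sum.cong) auto
    finally show ?thesis .
  qed
  have coeffA: "coeff (A u i) l = (\<Sum>i'\<in>{m..<k}. coeff (u i') l * \<beta> i i')" for u i l
    unfolding A_def coeff_sum by (intro sum.cong) (auto simp: mult.commute)
  have Tz_diff: "T (z u l) - z (A' u) l \<in> U" if u: "u \<in> Vs" for u l
  proof -
    have "T (z u l) - z (A' u) l = (\<Sum>i<n. scale ((\<Sum>i'\<in>{m..<k}. coeff (u i') l * \<beta> i i') -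
            (if m \<le> i \<and> i < k then coeff (A' u i) l else 0)) (L!i))"
      unfolding Tz[of u l] zext[of "A' u" l] by (simp only: scale_left_diff_distrib sum_subtractf)
    also have "\<dots> = (\<Sum>i<n. scale (if i < m then (\<Sum>i'\<in>{m..<k}. coeff (u i') l * \<beta> i i') else 0) (L!i))"
    proof (rule sum.cong[OF refl])
      fix i assume i: "i \<in> {..<n}"
      have "(\<Sum>i'\<in>{m..<k}. coeff (u i') l * \<beta> i i') - (if m \<le> i \<and> i < k then coeff (A' u i) l else 0)
          = (if i < m then (\<Sum>i'\<in>{m..<k}. coeff (u i') l * \<beta> i i') else 0)"
      proof (cases "i < m")
        case True then show ?thesis by simp
      next
        case False
        show ?thesis
        proof (cases "i < k")
          case True
          then show ?thesis using False by (simp add: A'_def coeffA)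
        next
          case False': False
          then have "A u i = 0" using F1[OF u, of i] i by simp
          then have "(\<Sum>i'\<in>{m..<k}. coeff (u i') l * \<beta> i i') = 0" using coeffA[of u i l] by simp
          then show ?thesis using False False' by simp
        qed
      qed
      then show "scale ((\<Sum>i'\<in>{m..<k}. coeff (u i') l * \<beta> i i') - (if m \<le> i \<and> i < k then coeff (A' u i) l else 0)) (L!i)
         = scale (if i < m then (\<Sum>i'\<in>{m..<k}. coeff (u i') l * \<beta> i i') else 0) (L!i)" by simp
    qed
    also have "\<dots> \<in> U"
      unfolding U_def
    proof (intro span_sum)
      fix i assume i: "i \<in> {..<n}"
      show "scale (if i < m then (\<Sum>i'\<in>{m..<k}. coeff (u i') l * \<beta> i i') else 0) (L!i) \<in> span (set (take m L))"
        using LU[unfolded U_def, of i] by (cases "i < m") (auto intro: span_zero span_scale)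
    qed
    finally show ?thesis .
  qed
  define Z where "Z = {z u l | u l. u \<in> Vs}"
  define S where "S = U \<union> Z"
  have SW: "S \<subseteq> W" using UW zW unfolding S_def Z_def by auto
  have TS: "T s \<in> span S" if s: "s \<in> S" for s
  proof (cases "s \<in> U")
    case True
    then have "T s \<in> U" using TU unfolding U_def by auto
    then show ?thesis unfolding S_def by (auto intro: span_base)
  next
    case False
    then obtain u l where u: "u \<in> Vs" and sz: "s = z u l" using s unfolding S_def Z_def by auto
    have eqT: "T s = (T (z u l) - z (A' u) l) + z (A' u) l" using sz by simp
    have s1: "T (z u l) - z (A' u) l \<in> span S"
      using Tz_diff[OF u, of l] unfolding S_def by (auto intro: span_base)
    have s2: "z (A' u) l \<in> span S"
      using F3[OF u] unfolding S_def Z_def by (auto intro: span_base)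
    show ?thesis unfolding eqT by (rule span_add[OF s1 s2])
  qed
  have spS: "span S \<subseteq> U"
    unfolding U_def
  proof (rule maxU)
    show "subspace (span S)" by simp
    show "span S \<subseteq> span (set (take k L))"
      using inv_span[OF WS add' sc' SW TS] unfolding W_def by auto
    show "T ` span S \<subseteq> span S" using inv_span[OF WS add' sc' SW TS] by auto
  qed
  define w' where "w' = (\<lambda>i. if i \<in> {m..<k} then w i else 0)"
  have w'V: "w' \<in> Vs"
  proof -
    have "E w' i = E w i" for i unfolding E_def w'_def by (intro sum.cong) auto
    moreover have "E w i = (\<Sum>i'\<in>{m..<k}. ((if i = i' then [:0,1:] else 0) - [:representation (set L) (T (L!i')) (L!i):]) * w i')" for i
      unfolding E_def \<beta>_def X ..
    ultimately show ?thesis unfolding Vs_def using wdvd wdeg by (auto simp: w'_def)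
  qed
  define l0 where "l0 = degree (w iz)"
  have c0: "coeff (w' iz) l0 \<noteq> 0" using wnz unfolding w'_def l0_def by simp
  have "z w' l0 \<in> Z" using w'V unfolding Z_def by auto
  then have zU': "z w' l0 \<in> span (set (take m L))" using spS span_base[of "z w' l0" S] unfolding S_def U_def by auto
  have iz: "iz < k" "m \<le> iz" using wnz by auto
  have notin: "L!iz \<notin> set (take m L)"
  proof
    assume "L!iz \<in> set (take m L)"
    then obtain j where j: "j < length (take m L)" "take m L ! j = L!iz" by (auto simp: in_set_conv_nth)
    then have "L!j = L!iz" "j < m" by auto
    then show False using d iz mk lL by (auto simp: nth_eq_iff_index_eq)
  qed
  have "representation (set L) (z w' l0) (L!iz) = 0"
    by (rule rep_outside[OF ind _ zU' notin]) (rule set_take_subset)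
  moreover have "representation (set L) (z w' l0) (L!iz) = coeff (w' iz) l0"
  proof -
    have "representation (set L) (z w' l0) (L!iz) =
        (\<Sum>i<k. (if m \<le> i then coeff (w' i) l0 else 0) * representation (set L) (L!i) (L!iz))"
      unfolding z_def by (rule rep_scale_sum[OF ind]) (use mk lL in \<open>auto intro: span_base\<close>)
    also have "\<dots> = (\<Sum>i<k. if i = iz then coeff (w' i) l0 else 0)"
    proof (rule sum.cong[OF refl])
      fix i assume i: "i \<in> {..<k}"
      have "representation (set L) (L!i) = (\<lambda>v. if v = L!i then 1 else 0)"
        by (rule representation_basis[OF ind]) (use i mk lL in simp)
      moreover have "(L!iz = L!i) = (i = iz)" using d i iz mk lL by (auto simp: nth_eq_iff_index_eq)
      ultimately show "(if m \<le> i then coeff (w' i) l0 else 0) * representation (set L) (L!i) (L!iz) =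
          (if i = iz then coeff (w' i) l0 else 0)" using iz by auto
    qed
    also have "\<dots> = coeff (w' iz) l0" using iz by simp
    finally show ?thesis .
  qed
  ultimately show False using c0 by simp
qed

end




lemma sum_shift_ivl: "(m::nat) \<le> k \<Longrightarrow> (\<Sum>i\<in>{m..<k}. g i) = (\<Sum>j<k-m. g (m+j))"
proof -
  assume mk: "m \<le> k"
  have "(\<Sum>i\<in>{0+m..<(k-m)+m}. g i) = (\<Sum>j\<in>{0..<k-m}. g (j+m))" by (rule sum.shift_bounds_nat_ivl)
  then show ?thesis using mk by (simp add: atLeast0LessThan add.commute)
qed

theorem mainTheorem1:
  fixes scale :: "'a::{field_gcd,finite} \<Rightarrow> 'v::ab_group_add \<Rightarrow> 'v"
    and bs :: "'v list" and k :: nat and T :: "'v \<Rightarrow> 'v"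
    and V W :: "'v set"
  assumes vs: "vector_space scale"
    and dist: "distinct bs"
    and indep: "module.independent scale (set bs)"
    and V_def: "V = module.span scale (set bs)"
    and k_pos: "0 < k" and kn: "k \<le> length bs"
    and W_def: "W = module.span scale (set (take k bs))"
    and T_into: "T ` W \<subseteq> V"
    and T_add: "\<forall>x\<in>W. \<forall>y\<in>W. T (x + y) = T x + T y"
    and T_scale: "\<forall>c. \<forall>x\<in>W. T (scale c x) = scale c (T x)"
  shows "vector_space.dim scale (max_inv_subspace scale W T)
           = degree (\<Prod>i = 1..k. inv_factor (charmat (matrix_of_map scale bs k T)) i)"
proof -
  interpret vector_space scale by (rule vs)
  define n where "n = length bs"
  define U where "U = max_inv_subspace scale W T"
  have Wsub: "subspace W" unfolding W_def by simp
  note MI = max_inv_exists[OF Wsub T_add T_scale, folded U_def]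
  have kn': "k \<le> n" using kn n_def by simp
  have dtk: "distinct (take k bs)" using dist by simp
  have itk: "independent (set (take k bs))" using indep set_take_subset by (rule independent_mono)
  have ctk: "card (set (take k bs)) = k" using dtk kn by (simp add: distinct_card)
  have dimW: "dim W = k" unfolding W_def using dim_span_eq_card_independent[OF itk] ctk by simp
  obtain BU where BU: "BU \<subseteq> U" "independent BU" "U \<subseteq> span BU" "card BU = dim U"
    using basis_exists by blast
  have BUW: "BU \<subseteq> span (set (take k bs))" using BU(1) MI(2) W_def by auto
  have finBU: "finite BU" using independent_span_bound[OF _ BU(2) BUW] by simp
  obtain us where us: "set us = BU" "distinct us" using finite_distinct_list[OF finBU] by blast
  define m where "m = length us"
  have mdim: "m = dim U" using us BU(4) distinct_card[OF us(2)] by (simp add: m_def)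
  have spanus: "span (set us) = U"
  proof
    show "span (set us) \<subseteq> U" using us(1) BU(1) MI(1) by (simp add: span_minimal)
    show "U \<subseteq> span (set us)" using us(1) BU(3) by simp
  qed
  obtain B2 where B2: "BU \<subseteq> B2" "B2 \<subseteq> W" "independent B2" "W \<subseteq> span B2"
    using maximal_independent_subset_extend[of BU W] BU(1) MI(2) BU(2) by blast
  have B2W: "B2 \<subseteq> span (set (take k bs))" using B2(2) W_def by simp
  have finB2: "finite B2" using independent_span_bound[OF _ B2(3) B2W] by simp
  have cB2: "card B2 = k" using basis_card_eq_dim[OF B2(2) B2(4) B2(3)] dimW by simp
  obtain rest where rest: "set rest = B2 - BU" "distinct rest" using finite_distinct_list[of "B2 - BU"] finB2 by blast
  define ws where "ws = us @ rest"
  have dws: "distinct ws" unfolding ws_def using us rest by auto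
  have sws: "set ws = B2" unfolding ws_def using B2(1) us rest by auto
  have lws: "length ws = k" using distinct_card[OF dws] sws cB2 by simp
  have mk0: "m \<le> k" using lws unfolding ws_def m_def by simp
  have spws: "span (set ws) = W"
  proof
    show "span (set ws) \<subseteq> W" using sws B2(2) Wsub by (simp add: span_minimal)
    show "W \<subseteq> span (set ws)" using sws B2(4) by simp
  qed
  define bs' where "bs' = ws @ drop k bs"
  have lbs': "length bs' = n" using lws kn by (simp add: bs'_def n_def)
  have tk: "take k bs' = ws" using lws by (simp add: bs'_def)
  have tm: "take m bs' = us" using lws unfolding bs'_def ws_def m_def by simp
  have WV: "W \<subseteq> V" unfolding W_def V_def by (rule span_mono) (rule set_take_subset)
  have Vsub: "subspace V" unfolding V_def by simp
  have sub1: "set bs' \<subseteq> V"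
  proof -
    have "set ws \<subseteq> V" using sws B2(2) WV by auto
    moreover have "set (drop k bs) \<subseteq> V"
    proof -
      have "set (drop k bs) \<subseteq> set bs" by (rule set_drop_subset)
      also have "set bs \<subseteq> span (set bs)" by (rule span_superset)
      finally show ?thesis unfolding V_def .
    qed
    ultimately show ?thesis unfolding bs'_def by simp
  qed
  have sub2: "V \<subseteq> span (set bs')"
  proof -
    have "set bs \<subseteq> span (set bs')"
    proof
      fix x assume x: "x \<in> set bs"
      have "set bs = set (take k bs) \<union> set (drop k bs)"
        by (metis append_take_drop_id set_append)
      then consider "x \<in> set (take k bs)" | "x \<in> set (drop k bs)" using x by blast
      then show "x \<in> span (set bs')"
      proof cases
        case 1
        then have "x \<in> W" unfolding W_def by (rule span_base)
        then have "x \<in> span (set ws)" using spws by simp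
        then show ?thesis using span_mono[of "set ws" "set bs'"] unfolding bs'_def by auto
      next
        case 2
        then show ?thesis unfolding bs'_def by (auto intro: span_base)
      qed
    qed
    then show ?thesis unfolding V_def by (rule span_minimal) simp
  qed
  have spbs': "span (set bs') = V"
  proof
    show "span (set bs') \<subseteq> V" using sub1 Vsub by (simp add: span_minimal)
    show "V \<subseteq> span (set bs')" by (rule sub2)
  qed
  have dimV: "dim V = n" unfolding V_def n_def
    using dim_span_eq_card_independent[OF indep] distinct_card[OF dist] by simp
  have ibs': "independent (set bs')"
  proof (rule card_le_dim_spanning'[OF sub1 sub2])
    show "finite (set bs')" by simp
    show "card (set bs') \<le> dim V" using dimV lbs' card_length[of bs'] by simp
  qed
  have dbs': "distinct bs'"
  proof -
    have "dim V \<le> card (set bs')" by (rule dim_le_card[OF sub2]) simp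
    then have "length bs' \<le> card (set bs')" using dimV lbs' by simp
    then have "card (set bs') = length bs'" using card_length[of bs'] by linarith
    then show ?thesis by (rule card_distinct)
  qed
  have Wbs': "span (set (take k bs')) = W" using tk spws by simp
  define B where "B = matrix_of_map scale bs k T"
  define B' where "B' = matrix_of_map scale bs' k T"
  have Bc: "B \<in> carrier_mat n k" by (simp add: B_def matrix_of_map_def n_def)
  have B'c: "B' \<in> carrier_mat n k" using lbs' by (simp add: B'_def matrix_of_map_def)
  have TV1: "T ` span (set (take k bs)) \<subseteq> span (set bs)" using T_into W_def V_def by simp
  have add1: "\<forall>x\<in>span (set (take k bs)). \<forall>y\<in>span (set (take k bs)). T (x + y) = T x + T y"
    using T_add W_def by simp
  have sc1: "\<forall>c. \<forall>x\<in>span (set (take k bs)). T (scale c x) = scale c (T x)" using T_scale W_def by simp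
  have TV2: "T ` span (set (take k bs')) \<subseteq> span (set bs')" using T_into Wbs' spbs' by simp
  have add2: "\<forall>x\<in>span (set (take k bs')). \<forall>y\<in>span (set (take k bs')). T (x + y) = T x + T y"
    using T_add Wbs' by simp
  have sc2: "\<forall>c. \<forall>x\<in>span (set (take k bs')). T (scale c x) = scale c (T x)" using T_scale Wbs' by simp
  have VV: "span (set bs) = span (set bs')" using spbs' V_def by simp
  have WW: "span (set (take k bs)) = span (set (take k bs'))" using Wbs' W_def by simp
  note bc1 = base_change[OF dist indep n_def[symmetric] dbs' ibs' lbs' VV WW kn' TV1 add1 sc1]
  note bc2 = base_change[OF dbs' ibs' lbs' dist indep n_def[symmetric] VV[symmetric] WW[symmetric] kn' TV2 add2 sc2]
  let ?Q1 = "mat n n (\<lambda>(i,r). representation (set bs) (bs'!r) (bs!i))"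
  let ?P1 = "mat k k (\<lambda>(l,j). representation (set bs') (bs!j) (bs'!l))"
  let ?Q2 = "mat n n (\<lambda>(i,r). representation (set bs') (bs!r) (bs'!i))"
  let ?P2 = "mat k k (\<lambda>(l,j). representation (set bs) (bs'!j) (bs!l))"
  have c1: "charmat B = map_mat (\<lambda>a. [:a:]) ?Q1 * charmat B' * map_mat (\<lambda>a. [:a:]) ?P1"
    unfolding B_def B'_def
    by (rule charmat_change[OF Bc[unfolded B_def] B'c[unfolded B'_def] _ _ kn' bc1(1) bc1(2)]) auto
  have c2: "charmat B' = map_mat (\<lambda>a. [:a:]) ?Q2 * charmat B * map_mat (\<lambda>a. [:a:]) ?P2"
    unfolding B_def B'_def
    by (rule charmat_change[OF B'c[unfolded B'_def] Bc[unfolded B_def] _ _ kn' bc2(1) bc2(2)]) auto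
  have notin: "bs'!i \<notin> set (take m bs')" if i: "m \<le> i" "i < n" for i
  proof
    assume "bs'!i \<in> set (take m bs')"
    then obtain j where j: "j < length (take m bs')" "take m bs' ! j = bs'!i" by (auto simp: in_set_conv_nth)
    then have e: "bs'!j = bs'!i" "j < m" by auto
    have "j < length bs'" "i < length bs'" using e(2) i lbs' mk0 kn' by auto
    then have "j = i" using e(1) nth_eq_iff_index_eq[OF dbs'] by blast
    then show False using e(2) i by simp
  qed
  have zero: "\<And>i j. j < m \<Longrightarrow> m \<le> i \<Longrightarrow> i < n \<Longrightarrow> B' $$ (i,j) = 0"
  proof -
    fix i j assume ij: "j < m" "m \<le> i" "i < n"
    have "B' $$ (i,j) = representation (set bs') (T (bs'!j)) (bs'!i)"
      unfolding B'_def using ij mk0 lbs' by (simp add: mom_index)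
    also have "\<dots> = 0"
    proof (rule rep_outside[OF ibs' set_take_subset _ notin[OF ij(2,3)]])
      have "bs'!j = us!j" unfolding bs'_def ws_def using ij(1) m_def by (simp add: nth_append)
      moreover have "us!j \<in> set us" using ij(1) m_def by simp
      ultimately have "bs'!j \<in> U" using us(1) BU(1) by auto
      then have "T (bs'!j) \<in> U" using MI(3) by auto
      then show "T (bs'!j) \<in> span (set (take m bs'))" using tm spanus by simp
    qed
    finally show "B' $$ (i,j) = 0" .
  qed
  have Q1c: "map_mat (\<lambda>a. [:a:]) ?Q1 \<in> carrier_mat n n" by simp
  have P1c: "map_mat (\<lambda>a. [:a:]) ?P1 \<in> carrier_mat k k" by simp
  have Q2c: "map_mat (\<lambda>a. [:a:]) ?Q2 \<in> carrier_mat n n" by simp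
  have P2c: "map_mat (\<lambda>a. [:a:]) ?P2 \<in> carrier_mat k k" by simp
  note core = matrix_core[OF Bc B'c mk0 kn' k_pos _ c1 Q1c P1c c2 Q2c P2c]
  have deg_eq: "degree (det_divisor (charmat B) k) = m"
  proof (rule ccontr)
    assume ne: "degree (det_divisor (charmat B) k) \<noteq> m"
    have "m \<le> degree (det_divisor (charmat B) k)" by (rule core(1)) (simp add: zero)
    then have gt: "m < degree (det_divisor (charmat B) k)" using ne by simp
    obtain p w where degp: "0 < degree p" and wdeg: "\<forall>j<k-m. degree (w j) < degree p"
      and wnz: "\<exists>j<k-m. w j \<noteq> 0"
      and wdvd: "\<forall>r<n-m. p dvd (\<Sum>j<k-m. ((if r = j then [:0,1:] else 0) - [:B' $$ (m+r, m+j):]) * w j)"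
      using core(2)[OF _ gt] zero by blast
    obtain j0 where j0: "j0 < k - m" "w j0 \<noteq> 0" using wnz by blast
    show False
    proof (rule no_extra[OF dbs' ibs' lbs' mk0 kn' TV2 add2 sc2, where p = p and w = "\<lambda>i. w (i - m)" and iz = "m + j0"])
      show "T ` span (set (take m bs')) \<subseteq> span (set (take m bs'))" using tm spanus MI(3) by simp
      show "\<And>U'. subspace U' \<Longrightarrow> U' \<subseteq> span (set (take k bs')) \<Longrightarrow> T ` U' \<subseteq> U' \<Longrightarrow> U' \<subseteq> span (set (take m bs'))"
        using MI(4) tm spanus Wbs' by simp
      show "0 < degree p" by (rule degp)
      show "\<And>i. i \<in> {m..<k} \<Longrightarrow> degree (w (i - m)) < degree p" using wdeg by auto
      show "m + j0 \<in> {m..<k}" using j0 by auto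
      show "w (m + j0 - m) \<noteq> 0" using j0 by simp
      show "p dvd (\<Sum>i'\<in>{m..<k}. ((if i = i' then [:0,1:] else 0) - [:representation (set bs') (T (bs'!i')) (bs'!i):]) * w (i' - m))"
        if i: "i \<in> {m..<n}" for i
      proof -
        define r where "r = i - m"
        have r: "r < n - m" "i = m + r" using i unfolding r_def by auto
        have "(\<Sum>i'\<in>{m..<k}. ((if i = i' then [:0,1:] else 0) - [:representation (set bs') (T (bs'!i')) (bs'!i):]) * w (i' - m))
          = (\<Sum>j<k-m. ((if i = m + j then [:0,1:] else 0) - [:representation (set bs') (T (bs'!(m+j))) (bs'!i):]) * w (m + j - m))"
          by (rule sum_shift_ivl[OF mk0])
        also have "\<dots> = (\<Sum>j<k-m. ((if r = j then [:0,1:] else 0) - [:B' $$ (m+r, m+j):]) * w j)"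
        proof (rule sum.cong[OF refl])
          fix j assume j: "j \<in> {..<k-m}"
          have "B' $$ (m+r, m+j) = representation (set bs') (T (bs'!(m+j))) (bs'!i)"
            unfolding B'_def using r j lbs' mk0 kn' by (subst mom_index) auto
          then show "((if i = m + j then [:0,1:] else 0) - [:representation (set bs') (T (bs'!(m+j))) (bs'!i):]) * w (m + j - m)
              = ((if r = j then [:0,1:] else 0) - [:B' $$ (m+r, m+j):]) * w j" using r by simp
        qed
        finally show ?thesis using wdvd r by simp
      qed
    qed
  qed
  have "(\<Prod>i = 1..k. inv_factor (charmat B) i) = det_divisor (charmat B) k"
    by (rule prod_inv_factor) (rule det_divisor_charmat_nz[OF Bc kn'], auto)
  then show ?thesis using deg_eq mdim unfolding U_def B_def by simp
qed


end
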